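(* Let $(v_{s,t})_{(s,t)\in\Delta}$ be an absolutely continuous reverse evolution family in $\mathbb H$ contained in $\mathcal{BF}_0$, with associated Herglotz vector field $\phi$, and suppose $\int_0^{+\infty}\phi''(\infty,t)\,\mathrm dt=+\infty$. Then for every $s\ge0$, $\lim_{t\to\infty}v_{s,t}(\infty)=0$; consequently, for the branching process $(Z_t)$ whose Laplace exponents are $(v_{s,t})$, $\mathbb P^{(s,x)}[T_0^s<\infty]=1$ for all $x>0$ and $s\ge0$.
   Context: $\Delta=\{(s,t):0\le s\le t\}$, $\mathbb H=\{\operatorname{Re}\zeta>0\}$; $L^1_{\rm loc}$: integrable on compact subintervals of $[0,\infty)$. $\mathcal{BF}$: Bernstein functions ($C^\infty$ $f:(0,\infty)\to\mathbb R$, $f\ge0$, $(-1)^{n-1}f^{(n)}\ge0$) not identically zero, extended holomorphically to $\mathbb H$. Denjoy–Wolff point of $v\in{\sf Hol}(\mathbb H,\mathbb H)$ (not ${\rm id}$, not an elliptic automorphism): the unique $\tau\in\overline{\mathbb H}\cup\{\infty\}$ with $v^{\circ n}\to\tau$ locally uniformly. $\mathcal{BF}_0$: ${\rm id}$ together with the $v\in\mathcal{BF}$ with Denjoy–Wolff point $0$. Absolutely continuous reverse evolution family: $v_{s,s}={\rm id}$, $v_{s,u}=v_{s,t}\circ v_{t,u}$, $|v_{s,u}(z)-v_{s,t}(z)|\le\int_t^uf_z$ with $f_z\in L^1_{\rm loc}$ nonnegative. Its associated Herglotz vector field is the (a.e. unique) $\phi$ with $\frac{\mathrm d}{\mathrm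 ds}v_{s,t}(\zeta)=\phi(v_{s,t}(\zeta),s)$ for a.e. $s\in[0,t]$; $\phi''$ denotes the second derivative in the spatial variable and $\phi''(\infty,t):=\lim_{\theta\to+\infty}\phi''(\theta,t)$ (it exists and is $\ge0$ for a.e. $t$). $v_{s,t}(\infty):=\lim_{\theta\to+\infty}v_{s,t}(\theta)$. A branching process on $[0,\infty]$ with Laplace exponents $(v_{s,t})$ is a Markov family $(Z_t)$ with probabilities $\mathbb P^{(s,x)}$ whose transition kernels $k_{s,t}$ satisfy $\int_{[0,\infty)}e^{-\theta y}k_{s,t}(x,\mathrm dy)=e^{-xv_{s,t}(\theta)}$ (plus $k_{s,t}(0,\cdot)=\delta_0$, $k_{s,t}(\infty,\cdot)=\delta_\infty$); here it is taken to be realized with sample paths in $D[0,\infty)$: càdlàg paths into $[0,\infty]$ that stay forever at $0$ (resp. $\infty$) once they or their left limits reach it. Extinction time: $T_0^s=\inf\{t\ge s:Z_t=0\}$. *)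

theory Defs
  imports "HOL-Complex_Analysis.Complex_Analysis" "HOL-Probability.Probability"
begin

definition RHP :: "complex set" where
  "RHP = {z. Re z > 0}"

definition hol_self :: "(complex \<Rightarrow> complex) \<Rightarrow> bool" where
  "hol_self f \<longleftrightarrow> f holomorphic_on RHP \<and> f ` RHP \<subseteq> RHP"

definition bernstein :: "(real \<Rightarrow> real) \<Rightarrow> bool" where
  "bernstein g \<longleftrightarrow>
     (\<forall>n. \<forall>x>0. ((deriv ^^ n) g has_real_derivative (deriv ^^ Suc n) g x) (at x)) \<and>
     (\<forall>x>0. g x \<ge> 0) \<and>
     (\<forall>n\<ge>1. \<forall>x>0. (-1) ^ (n - 1) * (deriv ^^ n) g x \<ge> 0) \<and>
     (\<exists>x>0. g x \<noteq> 0)"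

definition in_BF :: "(complex \<Rightarrow> complex) \<Rightarrow> bool" where
  "in_BF v \<longleftrightarrow> v holomorphic_on RHP \<and> (\<forall>x::real>0. v (of_real x) \<in> \<real>) \<and>
     bernstein (\<lambda>x. Re (v (of_real x)))"

definition elliptic_aut :: "(complex \<Rightarrow> complex) \<Rightarrow> bool" where
  "elliptic_aut v \<longleftrightarrow> v holomorphic_on RHP \<and> inj_on v RHP \<and> v ` RHP = RHP \<and>
     (\<exists>z\<in>RHP. v z = z)"

text \<open>Denjoy--Wolff point of v equals 0: v is not the identity, not an elliptic
  automorphism, and the iterates converge locally uniformly on the half-plane to 0.\<close>
definition DW_zero :: "(complex \<Rightarrow> complex) \<Rightarrow> bool" where
  "DW_zero v \<longleftrightarrow> hol_self v \<and> (\<exists>z\<in>RHP. v z \<noteq> z) \<and> \<not> elliptic_aut v \<and>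
     (\<forall>K. compact K \<and> K \<subseteq> RHP \<longrightarrow>
        uniform_limit K (\<lambda>n. v ^^ n) (\<lambda>_. 0) sequentially)"

definition in_BF0 :: "(complex \<Rightarrow> complex) \<Rightarrow> bool" where
  "in_BF0 v \<longleftrightarrow> (\<forall>z\<in>RHP. v z = z) \<or> (in_BF v \<and> DW_zero v)"

definition abs_cont_rev_evol_family :: "(real \<Rightarrow> real \<Rightarrow> complex \<Rightarrow> complex) \<Rightarrow> bool" where
  "abs_cont_rev_evol_family v \<longleftrightarrow>
     (\<forall>s t. 0 \<le> s \<and> s \<le> t \<longrightarrow> hol_self (v s t)) \<and>
     (\<forall>s\<ge>0. \<forall>z\<in>RHP. v s s z = z) \<and>
     (\<forall>s t u. 0 \<le> s \<and> s \<le> t \<and> t \<le> u \<longrightarrow> (\<forall>z\<in>RHP. v s u z = v s t (v t u z))) \<and>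
     (\<forall>z\<in>RHP. \<exists>f::real \<Rightarrow> real. (\<forall>t\<ge>0. f t \<ge> 0) \<and> (\<forall>T. f integrable_on {0..T}) \<and>
        (\<forall>s t u. 0 \<le> s \<and> s \<le> t \<and> t \<le> u \<longrightarrow> cmod (v s u z - v s t z) \<le> integral {t..u} f))"

definition assoc_herglotz_vf ::
  "(real \<Rightarrow> real \<Rightarrow> complex \<Rightarrow> complex) \<Rightarrow> (complex \<Rightarrow> real \<Rightarrow> complex) \<Rightarrow> bool" where
  "assoc_herglotz_vf v \<phi> \<longleftrightarrow>
     (AE t in lborel. 0 \<le> t \<longrightarrow> (\<lambda>z. \<phi> z t) holomorphic_on RHP) \<and>
     (\<forall>t\<ge>0. \<forall>\<zeta>\<in>RHP. AE s in lborel. s \<in> {0..t} \<longrightarrow>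
        ((\<lambda>r. v r t \<zeta>) has_vector_derivative \<phi> (v s t \<zeta>) s) (at s within {0..t}))"

definition phi2_inf :: "(complex \<Rightarrow> real \<Rightarrow> complex) \<Rightarrow> real \<Rightarrow> real" where
  "phi2_inf \<phi> t = Re (Lim at_top (\<lambda>\<theta>::real. deriv (deriv (\<lambda>z. \<phi> z t)) (of_real \<theta>)))"

definition v_inf :: "(real \<Rightarrow> real \<Rightarrow> complex \<Rightarrow> complex) \<Rightarrow> real \<Rightarrow> real \<Rightarrow> ennreal" where
  "v_inf v s t = Lim at_top (\<lambda>\<theta>::real. ennreal (Re (v s t (of_real \<theta>))))"

definition Dpaths :: "(real \<Rightarrow> ennreal) set" where
  "Dpaths = {f. (\<forall>t\<ge>0. (f \<longlongrightarrow> f t) (at_right t)) \<and>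
                (\<forall>t>0. \<exists>l. (f \<longlongrightarrow> l) (at_left t)) \<and>
                (\<forall>t\<ge>0. f t = 0 \<longrightarrow> (\<forall>u\<ge>t. f u = 0)) \<and>
                (\<forall>t>0. (f \<longlongrightarrow> 0) (at_left t) \<longrightarrow> (\<forall>u\<ge>t. f u = 0)) \<and>
                (\<forall>t\<ge>0. f t = \<infinity> \<longrightarrow> (\<forall>u\<ge>t. f u = \<infinity>)) \<and>
                (\<forall>t>0. (f \<longlongrightarrow> \<infinity>) (at_left t) \<longrightarrow> (\<forall>u\<ge>t. f u = \<infinity>))}"

definition laplace_kernels ::
  "(real \<Rightarrow> real \<Rightarrow> complex \<Rightarrow> complex) \<Rightarrow> (real \<Rightarrow> real \<Rightarrow> ennreal \<Rightarrow> ennreal measure) \<Rightarrow> bool" where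
  "laplace_kernels v k \<longleftrightarrow>
     (\<forall>s t. 0 \<le> s \<and> s \<le> t \<longrightarrow>
        (\<forall>x. prob_space (k s t x) \<and> sets (k s t x) = sets borel) \<and>
        (\<forall>x::real\<ge>0. \<forall>\<theta>::real>0.
           (\<integral>\<^sup>+ y. indicator {..<\<infinity>} y * ennreal (exp (- \<theta> * enn2real y)) \<partial>k s t (ennreal x))
             = ennreal (exp (- x * Re (v s t (of_real \<theta>))))) \<and>
        k s t 0 = return borel 0 \<and> k s t \<infinity> = return borel \<infinity>)"

definition branching_process ::
  "(real \<Rightarrow> real \<Rightarrow> complex \<Rightarrow> complex) \<Rightarrow> (real \<Rightarrow> ennreal \<Rightarrow> 'w measure) \<Rightarrow>
   (real \<Rightarrow> 'w \<Rightarrow> ennreal) \<Rightarrow> bool" where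
  "branching_process v P Z \<longleftrightarrow>
     (\<exists>k. laplace_kernels v k \<and>
       (\<forall>s s' x x'. sets (P s x) = sets (P s' x')) \<and>
       (\<forall>s x. prob_space (P s x) \<and> (\<forall>t. Z t \<in> borel_measurable (P s x)) \<and>
              (\<forall>\<omega>\<in>space (P s x). (\<lambda>t. Z t \<omega>) \<in> Dpaths)) \<and>
       (\<forall>s\<ge>0. \<forall>x. AE \<omega> in P s x. Z s \<omega> = x) \<and>
       (\<forall>s x t u B A. 0 \<le> s \<and> s \<le> t \<and> t \<le> u \<and> B \<in> sets borel \<and>
          A \<in> sigma_sets (space (P s x))
                 {{\<omega>\<in>space (P s x). Z r \<omega> \<in> C} | r C. r \<in> {s..t} \<and> C \<in> sets borel} \<longrightarrow>
          emeasure (P s x) (A \<inter> {\<omega>\<in>space (P s x). Z u \<omega> \<in> B})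
            = (\<integral>\<^sup>+\<omega>\<in>A. emeasure (k t u (Z t \<omega>)) B \<partial>P s x)))"

text \<open>Extinction time T_0^s = inf {t >= s. Z_t = 0} (in [s,oo], inf of empty set = oo).\<close>
definition extinction_time :: "(real \<Rightarrow> 'w \<Rightarrow> ennreal) \<Rightarrow> real \<Rightarrow> 'w \<Rightarrow> ereal" where
  "extinction_time Z s \<omega> = Inf (ereal ` {t. s \<le> t \<and> Z t \<omega> = 0})"

end

theory Submission
  imports Defs
begin

definition d2 :: "(real \<Rightarrow> real) \<Rightarrow> real \<Rightarrow> real \<Rightarrow> real" where
  "d2 f x h = f (x + 2*h) - 2 * f (x + h) + f x"

lemma L_mono:
  assumes "\<And>x. x > 0 \<Longrightarrow> (f has_real_derivative f' x) (at x)"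
    and "\<And>x. x > 0 \<Longrightarrow> f' x \<ge> 0" and "0 < x" "x \<le> y"
  shows "f x \<le> f y"
proof (rule DERIV_nonneg_imp_nondecreasing[OF \<open>x \<le> y\<close>])
  fix z assume "x \<le> z" "z \<le> y"
  then have "z > 0" using assms(3) by linarith
  then show "\<exists>y. (f has_real_derivative y) (at z) \<and> 0 \<le> y" using assms(1,2) by blast
qed

lemma L_antimono:
  assumes "\<And>x. x > 0 \<Longrightarrow> (f has_real_derivative f' x) (at x)"
    and "\<And>x. x > 0 \<Longrightarrow> f' x \<le> 0" and "0 < x" "x \<le> y"
  shows "f y \<le> f x"
proof -
  have "(\<lambda>x. - f x) x \<le> (\<lambda>x. - f x) y"
    by (rule L_mono[where f'="\<lambda>x. - f' x"]) (use assms in \<open>auto intro: derivative_intros\<close>)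
  then show ?thesis by simp
qed

lemma L_d2_nonneg:
  assumes "\<And>x. x > 0 \<Longrightarrow> (f has_real_derivative f' x) (at x)"
    and "\<And>x y. 0 < x \<Longrightarrow> x \<le> y \<Longrightarrow> f' x \<le> f' y" and "0 < x" "0 < h"
  shows "d2 f x h \<ge> 0"
proof -
  obtain z1 where z1: "z1 > x" "z1 < x + h" "f (x+h) - f x = (x + h - x) * f' z1"
    using MVT2[of x "x+h" f f'] assms by force
  obtain z2 where z2: "z2 > x + h" "z2 < x + h + h" "f (x+h+h) - f (x+h) = (x + h + h - (x+h)) * f' z2"
    using MVT2[of "x+h" "x+h+h" f f'] assms by force
  have "f' z1 \<le> f' z2" using assms z1 z2 by auto
  hence "h * f' z1 \<le> h * f' z2" using assms by (simp add: mult_left_mono)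
  have e: "x + 2*h = x + h + h" by simp
  have "d2 f x h = (f (x+h+h) - f (x+h)) - (f (x+h) - f x)" unfolding d2_def e by simp
  also have "\<dots> = h * f' z2 - h * f' z1" using z1(3) z2(3) by simp
  finally show ?thesis using \<open>h * f' z1 \<le> h * f' z2\<close> by simp
qed

lemma L_d2_nonpos:
  assumes "\<And>x. x > 0 \<Longrightarrow> (f has_real_derivative f' x) (at x)"
    and "\<And>x y. 0 < x \<Longrightarrow> x \<le> y \<Longrightarrow> f' y \<le> f' x" and "0 < x" "0 < h"
  shows "d2 f x h \<le> 0"
proof -
  have "d2 (\<lambda>x. - f x) x h \<ge> 0"
    by (rule L_d2_nonneg[where f'="\<lambda>x. - f' x"]) (use assms in \<open>auto intro: derivative_intros\<close>)
  thus ?thesis unfolding d2_def by simp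
qed

lemma L_d2_mono:
  assumes "\<And>x. x > 0 \<Longrightarrow> (f has_real_derivative f' x) (at x)"
    and "\<And>x. x > 0 \<Longrightarrow> (f' has_real_derivative f'' x) (at x)"
    and "\<And>x y. 0 < x \<Longrightarrow> x \<le> y \<Longrightarrow> f'' x \<le> f'' y" and "0 < x" "x \<le> y" "0 < h"
  shows "d2 f x h \<le> d2 f y h"
proof (rule L_mono[where f="\<lambda>x. d2 f x h" and f'="\<lambda>x. d2 f' x h"])
  fix x :: real assume x: "x > 0"
  show "((\<lambda>x. d2 f x h) has_real_derivative d2 f' x h) (at x)"
  proof -
    have a: "((\<lambda>x. f (x + c)) has_real_derivative f' (x + c)) (at x)" if "c \<ge> 0" for c
      using DERIV_shift[of f "f' (x+c)" x c] assms(1)[of "x+c"] x that by simp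
    show ?thesis unfolding d2_def
      using a[of "2*h"] a[of h] a[of 0] assms(6)
      by (auto intro!: derivative_eq_intros)
  qed
  show "d2 f' x h \<ge> 0" by (rule L_d2_nonneg[where f'=f'']) (use assms x in auto)
qed (use assms in auto)

lemma of_real_pos_RHP: "x > 0 \<Longrightarrow> of_real x \<in> RHP"
  by (simp add: RHP_def)

lemma BF0_real_basic:
  assumes "in_BF0 u" "hol_self u"
  shows "\<forall>x>0. u (of_real x) = of_real (Re (u (of_real x)))"
    and "\<forall>x>0. Re (u (of_real x)) > 0"
proof -
  show "\<forall>x>0. Re (u (of_real x)) > 0"
    using assms(2) of_real_pos_RHP unfolding hol_self_def RHP_def by blast
  show "\<forall>x>0. u (of_real x) = of_real (Re (u (of_real x)))"
  proof (intro allI impI)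
    fix x :: real assume x: "x > 0"
    from assms(1) consider "\<forall>z\<in>RHP. u z = z" | "in_BF u" unfolding in_BF0_def by blast
    then show "u (of_real x) = of_real (Re (u (of_real x)))"
    proof cases
      case 1 then show ?thesis using of_real_pos_RHP[OF x] by simp
    next
      case 2
      then have "u (of_real x) \<in> \<real>" using x unfolding in_BF_def by blast
      then show ?thesis by (simp add: complex_eq_iff complex_is_Real_iff)
    qed
  qed
qed

lemma BF0_real_props:
  assumes "in_BF0 u" "hol_self u"
  defines "g \<equiv> \<lambda>x. Re (u (of_real x))"
  shows "\<forall>x y. 0 < x \<longrightarrow> x \<le> y \<longrightarrow> g x \<le> g y"
    and "\<forall>x>0. g x \<le> x"
    and "\<forall>x y. 0 < x \<longrightarrow> x \<le> y \<longrightarrow> g y / y \<le> g x / x"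
    and "\<forall>x h. 0 < x \<longrightarrow> 0 < h \<longrightarrow> d2 g x h \<le> 0"
    and "\<forall>x y h. 0 < x \<longrightarrow> x \<le> y \<longrightarrow> 0 < h \<longrightarrow> d2 g x h \<le> d2 g y h"
proof -
  have ofr: "\<forall>x>0. u (of_real x) = of_real (g x)" and pos: "\<forall>x>0. g x > 0"
    using BF0_real_basic[OF assms(1,2)] unfolding g_def by auto
  from assms(1) consider "\<forall>z\<in>RHP. u z = z" | "in_BF u \<and> DW_zero u" unfolding in_BF0_def by blast
  hence "(\<forall>x y. 0 < x \<longrightarrow> x \<le> y \<longrightarrow> g x \<le> g y) \<and> (\<forall>x>0. g x \<le> x) \<and>
    (\<forall>x y. 0 < x \<longrightarrow> x \<le> y \<longrightarrow> g y / y \<le> g x / x) \<and>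
    (\<forall>x h. 0 < x \<longrightarrow> 0 < h \<longrightarrow> d2 g x h \<le> 0) \<and>
    (\<forall>x y h. 0 < x \<longrightarrow> x \<le> y \<longrightarrow> 0 < h \<longrightarrow> d2 g x h \<le> d2 g y h)"
  proof cases
    case 1
    hence gx: "\<And>x. x > 0 \<Longrightarrow> g x = x" unfolding g_def using of_real_pos_RHP by simp
    have "d2 g x h = 0" if "x > 0" "h > 0" for x h
      unfolding d2_def using gx that by simp
    then show ?thesis using gx by auto
  next
    case 2
    hence bern: "bernstein g" unfolding in_BF_def g_def by blast
    define g1 where "g1 = deriv g"
    define g2 where "g2 = (deriv ^^ Suc (Suc 0)) g"
    define g3 where "g3 = (deriv ^^ Suc (Suc (Suc 0))) g"
    have B: "\<And>n x. x > 0 \<Longrightarrow> ((deriv ^^ n) g has_real_derivative (deriv ^^ Suc n) g x) (at x)"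
      using bern unfolding bernstein_def by blast
    have D0: "\<And>x. x > 0 \<Longrightarrow> (g has_real_derivative g1 x) (at x)"
      using B[of _ 0] unfolding g1_def by simp
    have D1: "\<And>x. x > 0 \<Longrightarrow> (g1 has_real_derivative g2 x) (at x)"
      using B[of _ "Suc 0"] unfolding g1_def g2_def by simp
    have D2: "\<And>x. x > 0 \<Longrightarrow> (g2 has_real_derivative g3 x) (at x)"
      using B[of _ "Suc (Suc 0)"] unfolding g2_def g3_def by simp
    have S: "\<And>n x. n \<ge> 1 \<Longrightarrow> x > 0 \<Longrightarrow> (-1) ^ (n - 1) * (deriv ^^ n) g x \<ge> 0"
      using bern unfolding bernstein_def by blast
    have S1: "\<And>x. x > 0 \<Longrightarrow> g1 x \<ge> 0" using S[of "Suc 0"] unfolding g1_def by simp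
    have S2: "\<And>x. x > 0 \<Longrightarrow> g2 x \<le> 0" using S[of "Suc (Suc 0)"] unfolding g2_def by simp
    have S3: "\<And>x. x > 0 \<Longrightarrow> g3 x \<ge> 0" using S[of "Suc (Suc (Suc 0))"] unfolding g3_def by simp
    have gmono: "\<And>x y. 0 < x \<Longrightarrow> x \<le> y \<Longrightarrow> g x \<le> g y"
      by (rule L_mono[OF D0 S1])
    have g1anti: "\<And>x y. 0 < x \<Longrightarrow> x \<le> y \<Longrightarrow> g1 y \<le> g1 x"
      by (rule L_antimono[OF D1 S2])
    have g2mono: "\<And>x y. 0 < x \<Longrightarrow> x \<le> y \<Longrightarrow> g2 x \<le> g2 y"
      by (rule L_mono[OF D2 S3])
    have d2neg: "\<And>x h. 0 < x \<Longrightarrow> 0 < h \<Longrightarrow> d2 g x h \<le> 0"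
      by (rule L_d2_nonpos[OF D0 g1anti])
    have d2mono: "\<And>x y h. 0 < x \<Longrightarrow> x \<le> y \<Longrightarrow> 0 < h \<Longrightarrow> d2 g x h \<le> d2 g y h"
      by (rule L_d2_mono[OF D0 D1 g2mono])
    have tang: "x * g1 x \<le> g x" if x: "x > 0" for x
    proof (rule ccontr)
      assume "\<not> ?thesis"
      hence gap: "x * g1 x - g x > 0" by simp
      define e where "e = min (x/2) ((x * g1 x - g x) / (2 * (g1 x + 1)))"
      have g1x: "g1 x \<ge> 0" using S1 x .
      have e0: "e > 0" unfolding e_def using x gap g1x by auto
      have ex: "e < x" unfolding e_def using x by auto
      obtain z where z: "z > e" "z < x" "g x - g e = (x - e) * g1 z"
        using MVT2[of e x g g1] D0 e0 ex by force
      have "g1 x \<le> g1 z" using g1anti[of z x] z e0 by auto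
      hence "(x - e) * g1 x \<le> g x - g e" using z ex by (simp add: mult_left_mono)
      moreover have "g e > 0" using pos e0 by auto
      ultimately have "x * g1 x - g x < e * g1 x" by (simp add: algebra_simps)
      moreover have "e * g1 x \<le> (x * g1 x - g x) / 2"
      proof -
        have "e \<le> (x * g1 x - g x) / (2 * (g1 x + 1))" unfolding e_def by simp
        hence "e * g1 x \<le> (x * g1 x - g x) / (2 * (g1 x + 1)) * g1 x"
          using g1x by (rule mult_right_mono)
        also have "\<dots> \<le> (x * g1 x - g x) / 2"
          using gap g1x by (simp add: field_simps)
        finally show ?thesis .
      qed
      ultimately show False using gap by simp
    qed
    have ratio: "g y / y \<le> g x / x" if "0 < x" "x \<le> y" for x y
    proof (rule L_antimono[where f="\<lambda>x. g x / x" and f'="\<lambda>x. (g1 x * x - g x) / x^2"])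
      fix x :: real assume x: "x > 0"
      show "((\<lambda>x. g x / x) has_real_derivative (g1 x * x - g x) / x^2) (at x)"
        using D0[OF x] x by (auto intro!: derivative_eq_intros simp: power2_eq_square)
      show "(g1 x * x - g x) / x^2 \<le> 0"
        using tang[OF x] x by (intro divide_nonpos_pos) (auto simp: mult.commute)
    qed (use that in auto)
    have dw: "g x \<le> x" if x: "x > 0" for x
    proof (rule ccontr)
      assume "\<not> ?thesis"
      hence gx: "g x > x" by simp
      have it: "(u ^^ n) (of_real x) = of_real ((g ^^ n) x) \<and> (g ^^ n) x \<ge> x" for n
      proof (induction n)
        case 0 then show ?case by simp
      next
        case (Suc n)
        let ?y = "(g ^^ n) x"
        have y: "?y \<ge> x" "?y > 0" using Suc x by auto
        have "(u ^^ Suc n) (of_real x) = u (of_real ?y)" using Suc by simp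
        also have "\<dots> = of_real (g ?y)" using ofr y by auto
        finally show ?case using gmono[of x ?y] y gx x by simp
      qed
      have K: "compact {of_real x :: complex} \<and> {of_real x} \<subseteq> RHP"
        using of_real_pos_RHP[OF x] by auto
      have "uniform_limit {of_real x} (\<lambda>n. u ^^ n) (\<lambda>_. 0) sequentially"
        using 2 K unfolding DW_zero_def by blast
      from tendsto_uniform_limitI[OF this, of "of_real x"]
      have "((\<lambda>n. (u ^^ n) (of_real x)) \<longlongrightarrow> 0) sequentially" by simp
      hence "((\<lambda>n. norm ((u ^^ n) (of_real x))) \<longlongrightarrow> 0) sequentially"
        using tendsto_norm_zero by blast
      moreover have "\<forall>n. norm ((u ^^ n) (of_real x)) \<ge> x"
      proof
        fix n show "norm ((u ^^ n) (of_real x)) \<ge> x" using it[of n] x by simp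
      qed
      ultimately have "x \<le> 0" by (meson LIMSEQ_le_const)
      thus False using x by simp
    qed
    show ?thesis using gmono dw ratio d2neg d2mono by blast
  qed
  thus "\<forall>x y. 0 < x \<longrightarrow> x \<le> y \<longrightarrow> g x \<le> g y"
    and "\<forall>x>0. g x \<le> x"
    and "\<forall>x y. 0 < x \<longrightarrow> x \<le> y \<longrightarrow> g y / y \<le> g x / x"
    and "\<forall>x h. 0 < x \<longrightarrow> 0 < h \<longrightarrow> d2 g x h \<le> 0"
    and "\<forall>x y h. 0 < x \<longrightarrow> x \<le> y \<longrightarrow> 0 < h \<longrightarrow> d2 g x h \<le> d2 g y h" by blast+
qed

lemma seq_left_deriv:
  fixes g :: "real \<Rightarrow> real"
  assumes "(g has_real_derivative D) (at s)"
  shows "(\<lambda>n. real (Suc n) * (g s - g (s - inverse (real (Suc n))))) \<longlonglongrightarrow> D"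
proof -
  have q: "((\<lambda>y. (g y - g s) / (y - s)) \<longlongrightarrow> D) (at s)"
    using assms by (simp add: has_field_derivative_iff)
  have lim: "(\<lambda>n. s - inverse (real (Suc n))) \<longlonglongrightarrow> s"
    using tendsto_diff[OF tendsto_const LIMSEQ_inverse_real_of_nat, of s] by simp
  have "filterlim (\<lambda>n. s - inverse (real (Suc n))) (at s) sequentially"
    unfolding filterlim_at using lim by auto
  from filterlim_compose[OF q this]
  have "(\<lambda>n. (g (s - inverse (real (Suc n))) - g s) / (s - inverse (real (Suc n)) - s)) \<longlonglongrightarrow> D" .
  moreover have "(g (s - inverse (real (Suc n))) - g s) / (s - inverse (real (Suc n)) - s)
      = real (Suc n) * (g s - g (s - inverse (real (Suc n))))" for n
    by (simp add: field_simps)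
  ultimately show ?thesis by simp
qed

lemma seq_right_deriv:
  fixes g :: "real \<Rightarrow> real"
  assumes "(g has_real_derivative D) (at s)"
  shows "(\<lambda>n. real (Suc n) * (g (s + inverse (real (Suc n))) - g s)) \<longlonglongrightarrow> D"
proof -
  have q: "((\<lambda>y. (g y - g s) / (y - s)) \<longlongrightarrow> D) (at s)"
    using assms by (simp add: has_field_derivative_iff)
  have lim: "(\<lambda>n. s + inverse (real (Suc n))) \<longlonglongrightarrow> s"
    using tendsto_add[OF tendsto_const LIMSEQ_inverse_real_of_nat, of s] by simp
  have "filterlim (\<lambda>n. s + inverse (real (Suc n))) (at s) sequentially"
    unfolding filterlim_at using lim by auto
  from filterlim_compose[OF q this]
  have "(\<lambda>n. (g (s + inverse (real (Suc n))) - g s) / (s + inverse (real (Suc n)) - s)) \<longlonglongrightarrow> D" .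
  moreover have "(g (s + inverse (real (Suc n))) - g s) / (s + inverse (real (Suc n)) - s)
      = real (Suc n) * (g (s + inverse (real (Suc n))) - g s)" for n
    by (simp add: field_simps)
  ultimately show ?thesis by simp
qed

lemma eventually_inv_le:
  assumes "(s::real) > 0" shows "eventually (\<lambda>n. inverse (real (Suc n)) < s) sequentially"
  using order_tendstoD(2)[OF LIMSEQ_inverse_real_of_nat assms] .

lemma open_RHP: "open RHP"
  unfolding RHP_def by (rule open_halfspace_Re_gt)

locale fam =
  fixes v :: "real \<Rightarrow> real \<Rightarrow> complex \<Rightarrow> complex" and \<phi> :: "complex \<Rightarrow> real \<Rightarrow> complex"
  assumes ev: "abs_cont_rev_evol_family v"
    and bf: "\<forall>s t. 0 \<le> s \<and> s \<le> t \<longrightarrow> in_BF0 (v s t)"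
    and hf: "assoc_herglotz_vf v \<phi>"
begin

definition gg where "gg s t x = Re (v s t (of_real x))"

lemma hol: "0 \<le> s \<Longrightarrow> s \<le> t \<Longrightarrow> hol_self (v s t)"
  using ev unfolding abs_cont_rev_evol_family_def by blast

lemma inBF0: "0 \<le> s \<Longrightarrow> s \<le> t \<Longrightarrow> in_BF0 (v s t)"
  using bf by blast

lemma vreal: "0 \<le> s \<Longrightarrow> s \<le> t \<Longrightarrow> x > 0 \<Longrightarrow> v s t (of_real x) = of_real (gg s t x)"
  using BF0_real_basic(1)[OF inBF0[of s t] hol[of s t]] unfolding gg_def by blast

lemma gg_pos: "0 \<le> s \<Longrightarrow> s \<le> t \<Longrightarrow> x > 0 \<Longrightarrow> gg s t x > 0"
  using BF0_real_basic(2)[OF inBF0[of s t] hol[of s t]] unfolding gg_def by blast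

lemma gg_le: "0 \<le> s \<Longrightarrow> s \<le> t \<Longrightarrow> x > 0 \<Longrightarrow> gg s t x \<le> x"
  using BF0_real_props(2)[OF inBF0[of s t] hol[of s t]] unfolding gg_def by blast

lemma gg_mono: "0 \<le> s \<Longrightarrow> s \<le> t \<Longrightarrow> 0 < x \<Longrightarrow> x \<le> y \<Longrightarrow> gg s t x \<le> gg s t y"
  using BF0_real_props(1)[OF inBF0[of s t] hol[of s t]] unfolding gg_def by blast

lemma gg_ratio: "0 \<le> s \<Longrightarrow> s \<le> t \<Longrightarrow> 0 < x \<Longrightarrow> x \<le> y \<Longrightarrow> gg s t y / y \<le> gg s t x / x"
  using BF0_real_props(3)[OF inBF0[of s t] hol[of s t]] unfolding gg_def by blast

lemma gg_d2neg: "0 \<le> s \<Longrightarrow> s \<le> t \<Longrightarrow> 0 < x \<Longrightarrow> 0 < h \<Longrightarrow> d2 (gg s t) x h \<le> 0"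
  using BF0_real_props(4)[OF inBF0[of s t] hol[of s t]] unfolding gg_def by blast

lemma gg_d2mono: "0 \<le> s \<Longrightarrow> s \<le> t \<Longrightarrow> 0 < x \<Longrightarrow> x \<le> y \<Longrightarrow> 0 < h \<Longrightarrow>
    d2 (gg s t) x h \<le> d2 (gg s t) y h"
  using BF0_real_props(5)[OF inBF0[of s t] hol[of s t]] unfolding gg_def by blast

lemma vcomp: "0 \<le> s \<Longrightarrow> s \<le> t \<Longrightarrow> t \<le> u \<Longrightarrow> z \<in> RHP \<Longrightarrow> v s u z = v s t (v t u z)"
  using ev unfolding abs_cont_rev_evol_family_def by blast

lemma gg_comp: "0 \<le> s \<Longrightarrow> s \<le> t \<Longrightarrow> t \<le> u \<Longrightarrow> x > 0 \<Longrightarrow> gg s u x = gg s t (gg t u x)"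
proof -
  assume a: "0 \<le> s" "s \<le> t" "t \<le> u" "x > 0"
  have "v s u (of_real x) = v s t (v t u (of_real x))" using vcomp a of_real_pos_RHP by simp
  also have "\<dots> = v s t (of_real (gg t u x))" using vreal a by simp
  finally show ?thesis unfolding gg_def by simp
qed

lemma gg_cont:
  assumes "0 \<le> s" "x > 0" "e > 0"
  shows "\<exists>d>0. \<forall>t. s \<le> t \<and> t < s + d \<longrightarrow> \<bar>gg s t x - x\<bar> < e"
proof -
  obtain f :: "real \<Rightarrow> real" where f: "\<forall>T. f integrable_on {0..T}"
    "\<forall>s t u. 0 \<le> s \<and> s \<le> t \<and> t \<le> u \<longrightarrow> cmod (v s u (of_real x) - v s t (of_real x)) \<le> integral {t..u} f"
    using ev of_real_pos_RHP[OF assms(2)] unfolding abs_cont_rev_evol_family_def by meson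
  have ss: "v s s (of_real x) = of_real x"
    using ev of_real_pos_RHP[OF assms(2)] assms(1) unfolding abs_cont_rev_evol_family_def by blast
  have "f integrable_on {s..s+1}"
    using f(1) integrable_on_subinterval[of f "{0..s+1}" s "s+1"] assms(1) by force
  then obtain d where d: "d > 0" "\<forall>t. s \<le> t \<and> t < s + d \<longrightarrow> norm (integral {s..s} f - integral {s..t} f) < e"
    using indefinite_integral_continuous_right[of f s "s+1" s e] assms(3) by auto
  show ?thesis
  proof (intro exI[of _ d] conjI allI impI)
    fix t assume t: "s \<le> t \<and> t < s + d"
    have "cmod (v s t (of_real x) - v s s (of_real x)) \<le> integral {s..t} f"
      using f(2) assms t by blast
    moreover have ie: "\<bar>integral {s..t} f\<bar> < e" using d t by simp
    moreover have "v s t (of_real x) - v s s (of_real x) = of_real (gg s t x - x)"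
      using vreal[of s t x] ss assms t by simp
    ultimately have "\<bar>gg s t x - x\<bar> \<le> integral {s..t} f"
      by (metis norm_of_real)
    thus "\<bar>gg s t x - x\<bar> < e" using ie by linarith
  qed (use d in auto)
qed

end

lemma realder:
  assumes g: "g holomorphic_on RHP" and im: "\<forall>x>0. Im (g (of_real x)) = 0" and x: "x > 0"
  shows "((\<lambda>x. Re (g (of_real x))) has_real_derivative Re (deriv g (of_real x))) (at x)"
    and "Im (deriv g (of_real x)) = 0"
proof -
  have d: "(g has_field_derivative deriv g (of_real x)) (at (of_real x))"
    using holomorphic_derivI[OF g open_RHP of_real_pos_RHP[OF x]] by simp
  have vd: "((\<lambda>x. g (of_real x)) has_vector_derivative deriv g (of_real x)) (at x)"
    using has_vector_derivative_real_field[OF d] .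
  show "((\<lambda>x. Re (g (of_real x))) has_real_derivative Re (deriv g (of_real x))) (at x)"
    using bounded_linear.has_vector_derivative[OF bounded_linear_Re vd]
    by (simp add: has_real_derivative_iff_has_vector_derivative)
  have i1: "((\<lambda>x. Im (g (of_real x))) has_real_derivative Im (deriv g (of_real x))) (at x)"
    using bounded_linear.has_vector_derivative[OF bounded_linear_Im vd]
    by (simp add: has_real_derivative_iff_has_vector_derivative)
  have i2: "((\<lambda>x. 0::real) has_real_derivative Im (deriv g (of_real x))) (at x)"
    by (rule has_field_derivative_transform_within_open[OF i1, of "{0<..}"]) (use x im in auto)
  show "Im (deriv g (of_real x)) = 0"
    using DERIV_unique[OF i2 DERIV_const] .
qed

context fam begin

definition FF where "FF s n w = real (Suc n) * (w - gg (s - inverse (real (Suc n))) s w)"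

lemma FF_d2: "d2 (FF s n) x h = - real (Suc n) * d2 (gg (s - inverse (real (Suc n))) s) x h"
  unfolding d2_def FF_def by (simp add: algebra_simps)

lemma FF_props:
  assumes n: "inverse (real (Suc n)) \<le> s"
  shows "0 < w \<Longrightarrow> FF s n w \<ge> 0"
    and "0 < x \<Longrightarrow> x \<le> y \<Longrightarrow> FF s n x / x \<le> FF s n y / y"
    and "0 < x \<Longrightarrow> 0 < h \<Longrightarrow> d2 (FF s n) x h \<ge> 0"
    and "0 < x \<Longrightarrow> x \<le> y \<Longrightarrow> 0 < h \<Longrightarrow> d2 (FF s n) y h \<le> d2 (FF s n) x h"
proof -
  define r where "r = s - inverse (real (Suc n))"
  have r: "0 \<le> r" "r \<le> s" using n unfolding r_def by auto
  show "0 < w \<Longrightarrow> FF s n w \<ge> 0"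
    using gg_le[OF r, of w] unfolding FF_def r_def[symmetric] by simp
  show "0 < x \<Longrightarrow> x \<le> y \<Longrightarrow> FF s n x / x \<le> FF s n y / y"
  proof -
    assume xy: "0 < x" "x \<le> y"
    have e: "FF s n z / z = real (Suc n) * (1 - gg r s z / z)" if "z > 0" for z
      unfolding FF_def r_def[symmetric] using that by (simp add: field_simps)
    show ?thesis using gg_ratio[OF r xy] e[of x] e[of y] xy by (simp add: mult_left_mono)
  qed
  show "0 < x \<Longrightarrow> 0 < h \<Longrightarrow> d2 (FF s n) x h \<ge> 0"
  proof -
    assume a: "0 < x" "0 < h"
    have "d2 (gg r s) x h \<le> 0" using gg_d2neg[OF r a(1) a(2)] .
    then have "0 \<le> - real (Suc n) * d2 (gg r s) x h" by (simp add: mult_nonpos_nonpos)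
    then show ?thesis unfolding FF_d2 r_def .
  qed
  show "0 < x \<Longrightarrow> x \<le> y \<Longrightarrow> 0 < h \<Longrightarrow> d2 (FF s n) y h \<le> d2 (FF s n) x h"
  proof -
    assume a: "0 < x" "x \<le> y" "0 < h"
    have "d2 (gg r s) x h \<le> d2 (gg r s) y h" using gg_d2mono[OF r a] .
    then have "- real (Suc n) * d2 (gg r s) y h \<le> - real (Suc n) * d2 (gg r s) x h"
      by (simp add: mult_left_mono)
    then show ?thesis unfolding FF_d2 r_def .
  qed
qed

lemma conv_D:
  assumes s: "s > 0" "s < t" and q: "q > 0"
    and der: "((\<lambda>r. v r t (of_real q)) has_vector_derivative \<phi> (v s t (of_real q)) s) (at s within {0..t})"
  shows "(\<lambda>n. FF s n (gg s t q)) \<longlonglongrightarrow> Re (\<phi> (of_real (gg s t q)) s)"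
    and "Im (\<phi> (of_real (gg s t q)) s) = 0"
proof -
  define w where "w = gg s t q"
  have vw: "v s t (of_real q) = of_real w" unfolding w_def using vreal s q by simp
  have "at s within {0..t} = at s" by (rule at_within_interior) (use s in simp)
  hence der': "((\<lambda>r. v r t (of_real q)) has_vector_derivative \<phi> (of_real w) s) (at s)"
    using der vw by simp
  have dre: "((\<lambda>r. Re (v r t (of_real q))) has_real_derivative Re (\<phi> (of_real w) s)) (at s)"
    using bounded_linear.has_vector_derivative[OF bounded_linear_Re der']
    by (simp add: has_real_derivative_iff_has_vector_derivative)
  have dim: "((\<lambda>r. Im (v r t (of_real q))) has_real_derivative Im (\<phi> (of_real w) s)) (at s)"
    using bounded_linear.has_vector_derivative[OF bounded_linear_Im der']
    by (simp add: has_real_derivative_iff_has_vector_derivative)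
  have ev: "eventually (\<lambda>n. inverse (real (Suc n)) < s) sequentially"
    using eventually_inv_le[OF s(1)] .
  have eqr: "eventually (\<lambda>n. real (Suc n) * (Re (v s t (of_real q)) - Re (v (s - inverse (real (Suc n))) t (of_real q)))
      = FF s n w) sequentially"
    using ev
  proof eventually_elim
    case (elim n)
    let ?r = "s - inverse (real (Suc n))"
    have r: "0 \<le> ?r" "?r \<le> s" using elim by auto
    have "Re (v ?r t (of_real q)) = gg ?r t q" unfolding gg_def by simp
    also have "\<dots> = gg ?r s (gg s t q)" using gg_comp[of ?r s t q] r s q by simp
    finally show ?case unfolding FF_def w_def gg_def[symmetric] by simp
  qed
  show "(\<lambda>n. FF s n (gg s t q)) \<longlonglongrightarrow> Re (\<phi> (of_real (gg s t q)) s)"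
    using Lim_transform_eventually[OF seq_left_deriv[OF dre] eqr] unfolding w_def .
  have eqi: "eventually (\<lambda>n. real (Suc n) * (Im (v s t (of_real q)) - Im (v (s - inverse (real (Suc n))) t (of_real q)))
      = 0) sequentially"
    using ev
  proof eventually_elim
    case (elim n)
    let ?r = "s - inverse (real (Suc n))"
    have "inverse (real (Suc n)) > 0" by simp
    hence r: "0 \<le> ?r" "?r \<le> t" using elim s by linarith+
    show ?case using vreal[OF r q] vw by simp
  qed
  have "(\<lambda>n. 0::real) \<longlonglongrightarrow> Im (\<phi> (of_real w) s)"
    using Lim_transform_eventually[OF seq_left_deriv[OF dim] eqi] .
  then show "Im (\<phi> (of_real (gg s t q)) s) = 0"
    using LIMSEQ_unique[OF _ tendsto_const] unfolding w_def by metis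
qed

lemma dense_D:
  assumes s: "s \<ge> 0" and ab: "0 < a" "a < b"
  shows "\<exists>t q. t \<in> \<rat> \<and> q \<in> \<rat> \<and> s < t \<and> q > 0 \<and> a < gg s t q \<and> gg s t q < b"
proof -
  obtain q where q: "q \<in> \<rat>" "(3*a+b)/4 < q" "q < (a+3*b)/4"
    using Rats_dense_in_real[of "(3*a+b)/4" "(a+3*b)/4"] ab by auto
  have q0: "q > 0" using q(2) ab by (simp add: field_simps)
  obtain d where d: "d > 0" "\<forall>t. s \<le> t \<and> t < s + d \<longrightarrow> \<bar>gg s t q - q\<bar> < (b - a)/4"
    using gg_cont[OF s q0, of "(b-a)/4"] ab by auto
  obtain t where t: "t \<in> \<rat>" "s < t" "t < s + d"
    using Rats_dense_in_real[of s "s+d"] d by auto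
  have "\<bar>gg s t q - q\<bar> < (b - a)/4" using d t by auto
  then have "gg s t q - q < (b - a)/4" "q - gg s t q < (b - a)/4" by linarith+
  then have "a < gg s t q" "gg s t q < b" using q(2,3) by (simp_all add: field_simps)
  then show ?thesis using t q q0 by blast
qed

end

context fam begin

lemma struct_at:
  assumes s: "s > 0" and holo: "(\<lambda>z. \<phi> z s) holomorphic_on RHP"
    and der: "\<forall>t q. t \<in> \<rat> \<longrightarrow> q \<in> \<rat> \<longrightarrow> s < t \<longrightarrow> q > 0 \<longrightarrow>
       ((\<lambda>r. v r t (of_real q)) has_vector_derivative \<phi> (v s t (of_real q)) s) (at s within {0..t})"
  shows "phi2_inf \<phi> s \<ge> 0 \<and> (\<forall>w>0. Re (\<phi> (of_real w) s) \<ge> phi2_inf \<phi> s * w^2 / 2)"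
proof -
  define f where "f = (\<lambda>z. \<phi> z s)"
  define \<psi> where "\<psi> = (\<lambda>w. Re (f (of_real w)))"
  have Dc: "(\<lambda>n. FF s n (gg s t q)) \<longlonglongrightarrow> \<psi> (gg s t q)" and Di: "Im (f (of_real (gg s t q))) = 0"
    if tq: "t \<in> \<rat>" "q \<in> \<rat>" "s < t" "q > 0" for t q
    using conv_D[OF s tq(3) tq(4) der[rule_format, OF tq]] unfolding \<psi>_def f_def by auto
  have evs: "eventually (\<lambda>n. inverse (real (Suc n)) \<le> s) sequentially"
    using eventually_inv_le[OF s] by (rule eventually_mono) simp
  have holf: "f holomorphic_on RHP" using holo unfolding f_def .
  have cont_r: "isCont (\<lambda>x. g (of_real x)) x" if "g holomorphic_on RHP" "x > 0" for g x
  proof -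
    have c: "isCont g (of_real x)"
      using holomorphic_on_imp_continuous_on[OF that(1)] open_RHP of_real_pos_RHP[OF that(2)]
        continuous_on_eq_continuous_at by blast
    have c0: "isCont (of_real :: real \<Rightarrow> complex) x" by (intro continuous_intros)
    show ?thesis using isCont_o2[where f="of_real :: real \<Rightarrow> complex" and a=x and g=g, OF c0] c by simp
  qed
  have \<psi>c: "isCont \<psi> x" if "x > 0" for x
    unfolding \<psi>_def using isCont_Re[OF cont_r[OF holf that]] .
  have imc: "isCont (\<lambda>x. Im (f (of_real x))) x" if "x > 0" for x
    using isCont_Im[OF cont_r[OF holf that]] .
  have Im0: "Im (f (of_real w)) = 0" if w: "w > 0" for w
  proof (rule ccontr)
    assume ne: "Im (f (of_real w)) \<noteq> 0"
    let ?c = "Im (f (of_real w))"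
    have "((\<lambda>x. Im (f (of_real x))) \<midarrow>w\<rightarrow> ?c)" using imc[OF w] unfolding isCont_def .
    from LIM_D[OF this, of "\<bar>?c\<bar>"] ne obtain d where
      d: "d > 0" "\<forall>x. x \<noteq> w \<and> norm (x - w) < d \<longrightarrow> norm (Im (f (of_real x)) - ?c) < \<bar>?c\<bar>"
      by auto
    obtain t q where tq: "t \<in> \<rat>" "q \<in> \<rat>" "s < t" "q > 0" "w < gg s t q" "gg s t q < w + d"
      using dense_D[of s w "w + d"] s w d by auto
    have "Im (f (of_real (gg s t q))) = 0" using Di tq by auto
    moreover have "norm (Im (f (of_real (gg s t q))) - ?c) < \<bar>?c\<bar>" using d(2) tq by auto
    ultimately show False by simp
  qed
  have ratio_c: "isCont (\<lambda>x. \<psi> x / x) w" if "w > 0" for w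
    using \<psi>c[OF that] that by (intro continuous_intros) auto
  have Fall: "(\<lambda>n. FF s n w) \<longlonglongrightarrow> \<psi> w" if w: "w > 0" for w
  proof -
    have "(\<lambda>n. FF s n w / w) \<longlonglongrightarrow> \<psi> w / w"
    proof (rule order_tendstoI)
      fix a assume a: "a < \<psi> w / w"
      from LIM_D[OF ratio_c[OF w, unfolded isCont_def], of "\<psi> w / w - a"] a
      obtain d where d: "d > 0" "\<forall>x. x \<noteq> w \<and> norm (x - w) < d \<longrightarrow> norm (\<psi> x / x - \<psi> w / w) < \<psi> w / w - a"
        by auto
      have mw: "0 < max (w/2) (w - d)" "max (w/2) (w - d) < w" using w d by auto
      obtain t q where tq: "t \<in> \<rat>" "q \<in> \<rat>" "s < t" "q > 0" "max (w/2) (w - d) < gg s t q" "gg s t q < w"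
        using dense_D[OF less_imp_le[OF s] mw] by blast
      define y where "y = gg s t q"
      have y: "0 < y" "y < w" "norm (y - w) < d" using tq w unfolding y_def by auto
      have "norm (\<psi> y / y - \<psi> w / w) < \<psi> w / w - a" using d(2) y by auto
      hence "a < \<psi> y / y" by auto
      moreover have "(\<lambda>n. FF s n y / y) \<longlonglongrightarrow> \<psi> y / y"
        using Dc[OF tq(1-4)] y(1) unfolding y_def by (auto intro!: tendsto_intros)
      ultimately have "eventually (\<lambda>n. a < FF s n y / y) sequentially"
        using order_tendstoD(1) by blast
      then show "eventually (\<lambda>n. a < FF s n w / w) sequentially" using evs
      proof eventually_elim
        case (elim n)
        have "FF s n y / y \<le> FF s n w / w" using FF_props(2)[OF elim(2) y(1)] y by simp
        then show ?case using elim(1) by simp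
      qed
    next
      fix a assume a: "a > \<psi> w / w"
      from LIM_D[OF ratio_c[OF w, unfolded isCont_def], of "a - \<psi> w / w"] a
      obtain d where d: "d > 0" "\<forall>x. x \<noteq> w \<and> norm (x - w) < d \<longrightarrow> norm (\<psi> x / x - \<psi> w / w) < a - \<psi> w / w"
        by auto
      have mw: "0 < w" "w < w + d" using w d by auto
      obtain t q where tq: "t \<in> \<rat>" "q \<in> \<rat>" "s < t" "q > 0" "w < gg s t q" "gg s t q < w + d"
        using dense_D[OF less_imp_le[OF s] mw] by blast
      define y where "y = gg s t q"
      have y: "0 < y" "w < y" "norm (y - w) < d" using tq w unfolding y_def by auto
      have "norm (\<psi> y / y - \<psi> w / w) < a - \<psi> w / w" using d(2) y by auto
      hence "\<psi> y / y < a" by auto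
      moreover have "(\<lambda>n. FF s n y / y) \<longlonglongrightarrow> \<psi> y / y"
        using Dc[OF tq(1-4)] y(1) unfolding y_def by (auto intro!: tendsto_intros)
      ultimately have "eventually (\<lambda>n. FF s n y / y < a) sequentially"
        using order_tendstoD(2) by blast
      then show "eventually (\<lambda>n. FF s n w / w < a) sequentially" using evs
      proof eventually_elim
        case (elim n)
        have "FF s n w / w \<le> FF s n y / y" using FF_props(2)[OF elim(2) w] y by simp
        then show ?case using elim(1) by simp
      qed
    qed
    hence "(\<lambda>n. FF s n w / w * w) \<longlonglongrightarrow> \<psi> w / w * w" by (rule tendsto_mult_right)
    then show ?thesis using w by simp
  qed
  have P1: "\<psi> w \<ge> 0" if w: "w > 0" for w
    using tendsto_lowerbound[OF Fall[OF w] eventually_mono[OF evs FF_props(1)[OF _ w]]] by simp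
  have P2: "\<psi> x / x \<le> \<psi> y / y" if xy: "0 < x" "x \<le> y" for x y
  proof (rule tendsto_le[OF trivial_limit_sequentially])
    show "(\<lambda>n. FF s n y / y) \<longlonglongrightarrow> \<psi> y / y" using Fall[of y] xy by (intro tendsto_intros) auto
    show "(\<lambda>n. FF s n x / x) \<longlonglongrightarrow> \<psi> x / x" using Fall[of x] xy by (intro tendsto_intros) auto
    show "eventually (\<lambda>n. FF s n x / x \<le> FF s n y / y) sequentially"
      using eventually_mono[OF evs FF_props(2)[OF _ xy]] .
  qed
  have d2lim: "(\<lambda>n. d2 (FF s n) x h) \<longlonglongrightarrow> d2 \<psi> x h" if "x > 0" "h > 0" for x h
    unfolding d2_def using Fall[of x] Fall[of "x+h"] Fall[of "x + 2*h"] that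
    by (intro tendsto_intros) auto
  have P3: "d2 \<psi> x h \<ge> 0" if xh: "x > 0" "h > 0" for x h
    using tendsto_lowerbound[OF d2lim[OF xh] eventually_mono[OF evs FF_props(3)[OF _ xh]]] by simp
  have P4: "d2 \<psi> y h \<le> d2 \<psi> x h" if xy: "0 < x" "x \<le> y" "0 < h" for x y h
  proof (rule tendsto_le[OF trivial_limit_sequentially])
    show "(\<lambda>n. d2 (FF s n) x h) \<longlonglongrightarrow> d2 \<psi> x h" using d2lim xy by simp
    show "(\<lambda>n. d2 (FF s n) y h) \<longlonglongrightarrow> d2 \<psi> y h" using d2lim xy by simp
    show "eventually (\<lambda>n. d2 (FF s n) y h \<le> d2 (FF s n) x h) sequentially"
      using eventually_mono[OF evs FF_props(4)[OF _ xy]] .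
  qed
  define f1 where "f1 = deriv f"
  define f2 where "f2 = deriv f1"
  have holf1: "f1 holomorphic_on RHP" unfolding f1_def using holomorphic_deriv[OF holf open_RHP] .
  have holf2: "f2 holomorphic_on RHP" unfolding f2_def using holomorphic_deriv[OF holf1 open_RHP] .
  have Im0': "\<forall>x>0. Im (f (of_real x)) = 0" using Im0 by auto
  define \<psi>1 where "\<psi>1 = (\<lambda>x. Re (f1 (of_real x)))"
  define \<psi>2 where "\<psi>2 = (\<lambda>x. Re (f2 (of_real x)))"
  have D\<psi>: "(\<psi> has_real_derivative \<psi>1 x) (at x)" if "x > 0" for x
    using realder(1)[OF holf Im0' that] unfolding \<psi>_def \<psi>1_def f1_def .
  have Im1: "\<forall>x>0. Im (f1 (of_real x)) = 0" using realder(2)[OF holf Im0'] unfolding f1_def by auto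
  have D\<psi>1: "(\<psi>1 has_real_derivative \<psi>2 x) (at x)" if "x > 0" for x
    using realder(1)[OF holf1 Im1 that] unfolding \<psi>1_def \<psi>2_def f2_def .
  have Im2: "\<forall>x>0. Im (f2 (of_real x)) = 0" using realder(2)[OF holf1 Im1] unfolding f2_def by auto
  have \<psi>2c: "isCont \<psi>2 x" if "x > 0" for x
    unfolding \<psi>2_def using isCont_Re[OF cont_r[OF holf2 that]] .
  have d2rep: "\<exists>\<eta>. x < \<eta> \<and> \<eta> < x + 2*h \<and> d2 \<psi> x h = h * h * \<psi>2 \<eta>" if xh: "x > 0" "h > 0" for x h
  proof -
    define A where "A = (\<lambda>y. \<psi> (y + h) - \<psi> y)"
    have DA: "(A has_real_derivative (\<psi>1 (y + h) - \<psi>1 y)) (at y)" if y: "y > 0" for y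
    proof -
      have "((\<lambda>y. \<psi> (y + h)) has_real_derivative \<psi>1 (y + h)) (at y)"
        using DERIV_shift[of \<psi> "\<psi>1 (y+h)" y h] D\<psi>[of "y+h"] y xh by simp
      then show ?thesis unfolding A_def by (rule DERIV_diff[OF _ D\<psi>[OF y]])
    qed
    obtain \<xi> where \<xi>: "\<xi> > x" "\<xi> < x + h" "A (x + h) - A x = (x + h - x) * (\<psi>1 (\<xi> + h) - \<psi>1 \<xi>)"
      using MVT2[of x "x+h" A "\<lambda>y. \<psi>1 (y+h) - \<psi>1 y"] DA xh by force
    obtain \<eta> where \<eta>: "\<eta> > \<xi>" "\<eta> < \<xi> + h" "\<psi>1 (\<xi> + h) - \<psi>1 \<xi> = (\<xi> + h - \<xi>) * \<psi>2 \<eta>"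
      using MVT2[of \<xi> "\<xi>+h" \<psi>1 \<psi>2] D\<psi>1 \<xi> xh by force
    have e: "x + h + h = x + 2*h" by simp
    have "d2 \<psi> x h = A (x + h) - A x" unfolding A_def d2_def e by simp
    also have "\<dots> = h * h * \<psi>2 \<eta>" using \<xi>(3) \<eta>(3) by simp
    finally show ?thesis using \<xi> \<eta> by (intro exI[of _ \<eta>]) auto
  qed
  have \<psi>2nn: "\<psi>2 x \<ge> 0" if x: "x > 0" for x
  proof (rule ccontr)
    assume "\<not> ?thesis" hence neg: "\<psi>2 x < 0" by simp
    from LIM_D[OF \<psi>2c[OF x, unfolded isCont_def], of "- \<psi>2 x"] neg obtain d where
      d: "d > 0" "\<forall>y. y \<noteq> x \<and> norm (y - x) < d \<longrightarrow> norm (\<psi>2 y - \<psi>2 x) < - \<psi>2 x" by auto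
    define h where "h = d / 4"
    have h: "h > 0" unfolding h_def using d by simp
    obtain \<eta> where \<eta>: "x < \<eta>" "\<eta> < x + 2*h" "d2 \<psi> x h = h * h * \<psi>2 \<eta>"
      using d2rep[OF x h] by auto
    have "norm (\<psi>2 \<eta> - \<psi>2 x) < - \<psi>2 x" using d(2) \<eta> h_def d by auto
    hence "\<psi>2 \<eta> < 0" by auto
    hence "h * h * \<psi>2 \<eta> < 0" using h by (simp add: mult_pos_neg)
    thus False using P3[OF x h] \<eta>(3) by simp
  qed
  have \<psi>2dec: "\<psi>2 y \<le> \<psi>2 x" if xy: "0 < x" "x < y" for x y
  proof (rule ccontr)
    assume "\<not> ?thesis" hence lt: "\<psi>2 x < \<psi>2 y" by simp
    define m where "m = (\<psi>2 x + \<psi>2 y) / 2"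
    have y0: "y > 0" using xy by simp
    from LIM_D[OF \<psi>2c[OF xy(1), unfolded isCont_def], of "m - \<psi>2 x"] lt obtain d1 where
      d1: "d1 > 0" "\<forall>z. z \<noteq> x \<and> norm (z - x) < d1 \<longrightarrow> norm (\<psi>2 z - \<psi>2 x) < m - \<psi>2 x"
      unfolding m_def by auto
    from LIM_D[OF \<psi>2c[OF y0, unfolded isCont_def], of "\<psi>2 y - m"] lt obtain d2' where
      d2': "d2' > 0" "\<forall>z. z \<noteq> y \<and> norm (z - y) < d2' \<longrightarrow> norm (\<psi>2 z - \<psi>2 y) < \<psi>2 y - m"
      unfolding m_def by auto
    define h where "h = min d1 d2' / 4"
    have h: "h > 0" unfolding h_def using d1 d2' by simp
    obtain \<eta>1 where \<eta>1: "x < \<eta>1" "\<eta>1 < x + 2*h" "d2 \<psi> x h = h * h * \<psi>2 \<eta>1"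
      using d2rep[OF xy(1) h] by auto
    obtain \<eta>2 where \<eta>2: "y < \<eta>2" "\<eta>2 < y + 2*h" "d2 \<psi> y h = h * h * \<psi>2 \<eta>2"
      using d2rep[OF y0 h] by auto
    have "norm (\<psi>2 \<eta>1 - \<psi>2 x) < m - \<psi>2 x" using d1(2) \<eta>1 h_def d1 d2' by auto
    hence a1: "\<psi>2 \<eta>1 < m" by auto
    have "norm (\<psi>2 \<eta>2 - \<psi>2 y) < \<psi>2 y - m" using d2'(2) \<eta>2 h_def d1 d2' by auto
    hence a2: "m < \<psi>2 \<eta>2" by auto
    have hh: "h * h > 0" using h by simp
    have "\<psi>2 \<eta>1 < \<psi>2 \<eta>2" using a1 a2 by linarith
    from mult_strict_left_mono[OF this hh]
    have "h * h * \<psi>2 \<eta>1 < h * h * \<psi>2 \<eta>2" .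
    thus False using P4[OF xy(1) _ h, of y] xy \<eta>1(3) \<eta>2(3) by simp
  qed
  define L where "L = (INF x\<in>{0<..}. \<psi>2 x)"
  have bdd: "bdd_below (\<psi>2 ` {0<..})" using \<psi>2nn by (intro bdd_belowI[of _ 0]) auto
  have Lle: "L \<le> \<psi>2 x" if "x > 0" for x
    unfolding L_def using cINF_lower[OF bdd, of x] that by simp
  have L0: "L \<ge> 0" unfolding L_def by (rule cINF_greatest) (use \<psi>2nn in auto)
  have lim2: "(\<psi>2 \<longlongrightarrow> L) at_top"
  proof (rule order_tendstoI)
    fix a assume a: "a > L"
    then obtain x where x: "x > 0" "\<psi>2 x < a" unfolding L_def using cINF_less_iff[OF _ bdd] by auto
    show "eventually (\<lambda>y. \<psi>2 y < a) at_top"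
      using eventually_gt_at_top[of x]
    proof eventually_elim
      case (elim y) thus ?case using \<psi>2dec[OF x(1) elim] x by simp
    qed
  next
    fix a assume a: "a < L"
    show "eventually (\<lambda>y. a < \<psi>2 y) at_top"
      using eventually_gt_at_top[of 0]
    proof eventually_elim
      case (elim y) thus ?case using Lle[OF elim] a by simp
    qed
  qed
  have "((\<lambda>\<theta>. f2 (of_real \<theta>)) \<longlongrightarrow> of_real L) at_top"
  proof -
    have "((\<lambda>\<theta>. of_real (\<psi>2 \<theta>) :: complex) \<longlongrightarrow> of_real L) at_top" using tendsto_of_real[OF lim2] .
    moreover have "eventually (\<lambda>\<theta>. of_real (\<psi>2 \<theta>) = f2 (of_real \<theta>)) at_top"
      using eventually_gt_at_top[of 0]
    proof eventually_elim
      case (elim y) thus ?case using Im2 by (simp add: \<psi>2_def complex_eq_iff)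
    qed
    ultimately show ?thesis by (rule Lim_transform_eventually)
  qed
  hence "Lim at_top (\<lambda>\<theta>. f2 (of_real \<theta>)) = of_real L"
    using tendsto_Lim[OF trivial_limit_at_top_linorder] by blast
  hence phiL: "phi2_inf \<phi> s = L" unfolding phi2_inf_def f2_def f1_def f_def by simp
  have \<psi>1ge: "\<psi>1 y \<ge> \<psi> y / y" if y: "y > 0" for y
  proof -
    have "(\<lambda>n. real (Suc n) * (\<psi> (y + inverse (real (Suc n))) - \<psi> y)) \<longlonglongrightarrow> \<psi>1 y"
      using seq_right_deriv[OF D\<psi>[OF y]] .
    moreover have "\<forall>n. real (Suc n) * (\<psi> (y + inverse (real (Suc n))) - \<psi> y) \<ge> \<psi> y / y"
    proof
      fix n
      define e where "e = inverse (real (Suc n))"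
      have e: "e > 0" unfolding e_def by simp
      have "\<psi> y / y \<le> \<psi> (y + e) / (y + e)" using P2[of y "y + e"] y e by simp
      hence "(y + e) * (\<psi> y / y) \<le> \<psi> (y + e)" using y e by (simp add: field_simps)
      moreover have "(y + e) * (\<psi> y / y) = \<psi> y + e * (\<psi> y / y)" using y by (simp add: field_simps)
      ultimately have "e * (\<psi> y / y) \<le> \<psi> (y + e) - \<psi> y" by simp
      hence "real (Suc n) * (e * (\<psi> y / y)) \<le> real (Suc n) * (\<psi> (y + e) - \<psi> y)"
        by (rule mult_left_mono) simp
      moreover have "real (Suc n) * (e * (\<psi> y / y)) = \<psi> y / y" unfolding e_def by simp
      ultimately have "\<psi> y / y \<le> real (Suc n) * (\<psi> (y + e) - \<psi> y)" by linarith
      then show "real (Suc n) * (\<psi> (y + inverse (real (Suc n))) - \<psi> y) \<ge> \<psi> y / y"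
        unfolding e_def .
    qed
    ultimately show ?thesis by (intro LIMSEQ_le_const) auto
  qed
  define ch where "ch = (\<lambda>x. \<psi> x - L * x^2 / 2)"
  define ch1 where "ch1 = (\<lambda>x. \<psi>1 x - L * x)"
  have Dch: "(ch has_real_derivative ch1 x) (at x)" if "x > 0" for x
    unfolding ch_def ch1_def using D\<psi>[OF that] by (auto intro!: derivative_eq_intros)
  have Dch1: "(ch1 has_real_derivative (\<psi>2 x - L)) (at x)" if "x > 0" for x
    unfolding ch1_def using D\<psi>1[OF that] by (auto intro!: derivative_eq_intros)
  have ch1mono: "ch1 y \<le> ch1 x" if "0 < y" "y \<le> x" for x y
    by (rule L_mono[OF Dch1]) (use Lle that in auto)
  have key: "ch x \<ge> - (L * x * y)" if xy: "0 < y" "y < x" for x y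
  proof -
    obtain \<xi> where \<xi>: "\<xi> > y" "\<xi> < x" "ch x - ch y = (x - y) * ch1 \<xi>"
      using MVT2[of y x ch ch1] Dch xy by force
    have "ch1 y \<le> ch1 \<xi>" using ch1mono[of y \<xi>] \<xi> xy by auto
    hence "(x - y) * ch1 y \<le> (x - y) * ch1 \<xi>" using xy by (simp add: mult_left_mono)
    hence a1: "ch x \<ge> ch y + (x - y) * ch1 y" using \<xi>(3) by simp
    have "ch1 y \<ge> \<psi> y / y - L * y" using \<psi>1ge[OF xy(1)] unfolding ch1_def by simp
    hence "(x - y) * ch1 y \<ge> (x - y) * (\<psi> y / y - L * y)" using xy by (simp add: mult_left_mono)
    moreover have "(x - y) * (\<psi> y / y) \<ge> 0" using P1[OF xy(1)] xy by simp
    ultimately have a2: "(x - y) * ch1 y \<ge> - ((x - y) * (L * y))" by (simp add: algebra_simps)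
    have a3: "ch y \<ge> - (L * y^2 / 2)" using P1[OF xy(1)] unfolding ch_def by simp
    have a4: "- (L * y^2 / 2) - ((x - y) * (L * y)) = - (L * x * y) + L * y^2 / 2"
      by (simp add: algebra_simps power2_eq_square)
    have a5: "L * y^2 / 2 \<ge> 0" using L0 by simp
    show ?thesis using a1 a2 a3 a4 a5 by linarith
  qed
  have final: "\<psi> w \<ge> L * w^2 / 2" if w: "w > 0" for w
  proof (rule ccontr)
    assume "\<not> ?thesis" hence neg: "ch w < 0" unfolding ch_def by simp
    define c where "c = - ch w / (2 * (L * w + 1))"
    have Lw: "L * w \<ge> 0" using L0 w by simp
    have c0: "c > 0" unfolding c_def using neg Lw by (intro divide_pos_pos) auto
    define y where "y = min (w/2) c"
    have y: "0 < y" "y < w" using w c0 unfolding y_def by auto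
    have k: "ch w \<ge> - (L * w * y)" using key[OF y] .
    have "L * w * y \<le> L * w * c" using Lw y_def by (simp add: mult_left_mono)
    also have "\<dots> \<le> (L * w + 1) * c" using c0 by (simp add: mult_right_mono)
    also have "\<dots> = - ch w / 2" unfolding c_def using Lw by (simp add: field_simps)
    finally have "L * w * y \<le> - ch w / 2" .
    thus False using k neg by linarith
  qed
  show ?thesis using phiL L0 final unfolding \<psi>_def f_def by auto
qed

end

lemma antimono_borel:
  fixes H :: "real \<Rightarrow> real"
  assumes anti: "\<And>x y. x \<le> y \<Longrightarrow> H y \<le> H x"
  shows "H \<in> borel_measurable borel"
proof -
  have "mono (\<lambda>x. - H x)" unfolding mono_def using anti by auto
  hence "(\<lambda>x. - H x) \<in> borel_measurable borel" by (rule borel_measurable_mono)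
  hence "(\<lambda>x. - (- H x)) \<in> borel_measurable borel" by measurable
  thus ?thesis by simp
qed

lemma mono_shift_bound:
  fixes H :: "real \<Rightarrow> real"
  assumes anti: "\<And>x y. x \<le> y \<Longrightarrow> H y \<le> H x" and nn: "\<And>x. H x \<ge> 0" and bnd: "\<And>x. H x \<le> B"
    and d: "d > 0" and aT: "a \<le> T"
  shows "(\<integral>\<^sup>+ r. indicator {a..T} r * ennreal ((H (r - d) - H r) / d) \<partial>lborel) \<le> ennreal B"
proof -
  have Hm: "H \<in> borel_measurable borel" by (rule antimono_borel[OF anti])
  have B0: "B \<ge> 0" using nn[of 0] bnd[of 0] by simp
  define z where "z = (\<lambda>r. indicator {a..T} r * ennreal (H (r - d) - H r))"
  define f1 where "f1 = (\<lambda>r. indicator {a..T} r * ennreal (H (r - d)))"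
  define f2 where "f2 = (\<lambda>r. indicator {a..T} r * ennreal (H r))"
  have zm: "z \<in> borel_measurable lborel" unfolding z_def using Hm by measurable
  have f2m: "f2 \<in> borel_measurable lborel" unfolding f2_def using Hm by measurable
  have pw: "f1 r = z r + f2 r" for r
  proof -
    have "H (r - d) - H r \<ge> 0" using anti[of "r - d" r] d by simp
    hence "ennreal (H (r - d)) = ennreal (H (r - d) - H r) + ennreal (H r)"
      using ennreal_plus[of "H (r - d) - H r" "H r"] nn[of r] by simp
    thus ?thesis unfolding f1_def z_def f2_def by (cases "r \<in> {a..T}") auto
  qed
  have I1: "integral\<^sup>N lborel f1 = integral\<^sup>N lborel z + integral\<^sup>N lborel f2"
    unfolding pw[abs_def] by (rule nn_integral_add[OF zm f2m])
  define g where "g = (\<lambda>r. indicator {a-d..T-d} r * ennreal (H r))"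
  have gm: "g \<in> borel_measurable borel" unfolding g_def using Hm by measurable
  have I2: "integral\<^sup>N lborel g = integral\<^sup>N lborel f1"
  proof -
    have "integral\<^sup>N lborel g = ennreal \<bar>1\<bar> * (\<integral>\<^sup>+ x. g (- d + 1 * x) \<partial>lborel)"
      by (rule nn_integral_real_affine[OF gm]) simp
    also have "(\<lambda>x. g (- d + 1 * x)) = f1"
    proof
      fix x
      have "(- d + x \<in> {a-d..T-d}) = (x \<in> {a..T})" by auto
      thus "g (- d + 1 * x) = f1 x" unfolding g_def f1_def indicator_def by simp
    qed
    finally show ?thesis by simp
  qed
  define w where "w = (\<lambda>r. indicator {a-d..a} r * ennreal (H r))"
  have wm: "w \<in> borel_measurable lborel" unfolding w_def using Hm by measurable
  have I3: "integral\<^sup>N lborel g \<le> integral\<^sup>N lborel w + integral\<^sup>N lborel f2"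
  proof -
    have "integral\<^sup>N lborel g \<le> (\<integral>\<^sup>+ r. w r + f2 r \<partial>lborel)"
    proof (rule nn_integral_mono)
      fix r
      show "g r \<le> w r + f2 r"
        unfolding g_def w_def f2_def indicator_def using d by auto
    qed
    also have "\<dots> = integral\<^sup>N lborel w + integral\<^sup>N lborel f2" by (rule nn_integral_add[OF wm f2m])
    finally show ?thesis .
  qed
  have I4: "integral\<^sup>N lborel w \<le> ennreal (d * B)"
  proof -
    have "integral\<^sup>N lborel w \<le> (\<integral>\<^sup>+ r. ennreal B * indicator {a-d..a} r \<partial>lborel)"
      by (rule nn_integral_mono) (auto simp: w_def indicator_def intro: ennreal_leI bnd)
    also have "\<dots> = ennreal B * emeasure lborel {a-d..a}" by (rule nn_integral_cmult_indicator) simp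
    also have "\<dots> = ennreal (d * B)" using d B0 by (simp add: ennreal_mult[symmetric] mult.commute)
    finally show ?thesis .
  qed
  have I5: "integral\<^sup>N lborel f2 \<noteq> \<infinity>"
  proof -
    have "integral\<^sup>N lborel f2 \<le> (\<integral>\<^sup>+ r. ennreal B * indicator {a..T} r \<partial>lborel)"
      by (rule nn_integral_mono) (auto simp: f2_def indicator_def intro: ennreal_leI bnd)
    also have "\<dots> = ennreal B * emeasure lborel {a..T}" by (rule nn_integral_cmult_indicator) simp
    also have "\<dots> < \<infinity>" using aT by (simp add: ennreal_mult_less_top)
    finally show ?thesis by simp
  qed
  have "integral\<^sup>N lborel z + integral\<^sup>N lborel f2 \<le> ennreal (d * B) + integral\<^sup>N lborel f2"
    using I1 I2 I3 I4 by (metis add_right_mono order_trans)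
  hence Iz: "integral\<^sup>N lborel z \<le> ennreal (d * B)"
    using I5 by (simp add: add.commute[of _ "integral\<^sup>N lborel f2"] ennreal_add_left_cancel_le)
  have "(\<integral>\<^sup>+ r. indicator {a..T} r * ennreal ((H (r - d) - H r) / d) \<partial>lborel)
      = (\<integral>\<^sup>+ r. ennreal (1 / d) * z r \<partial>lborel)"
  proof (rule nn_integral_cong)
    fix r
    have "ennreal ((H (r - d) - H r) / d) = ennreal (1 / d) * ennreal (H (r - d) - H r)"
      using d ennreal_mult'[of "1/d" "H (r - d) - H r"] by (simp add: divide_inverse mult.commute)
    thus "indicator {a..T} r * ennreal ((H (r - d) - H r) / d) = ennreal (1 / d) * z r"
      unfolding z_def by (simp add: mult.left_commute)
  qed
  also have "\<dots> = ennreal (1 / d) * integral\<^sup>N lborel z" by (rule nn_integral_cmult[OF zm])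
  also have "\<dots> \<le> ennreal (1 / d) * ennreal (d * B)" by (rule mult_left_mono[OF Iz]) simp
  also have "\<dots> = ennreal B" using d B0 by (simp add: ennreal_mult[symmetric])
  finally show ?thesis .
qed

context fam begin

lemma good_AE:
  "AE s in lborel. s > 0 \<longrightarrow> phi2_inf \<phi> s \<ge> 0 \<and> (\<forall>w>0. Re (\<phi> (of_real w) s) \<ge> phi2_inf \<phi> s * w^2 / 2)"
proof -
  have h1: "AE t in lborel. 0 \<le> t \<longrightarrow> (\<lambda>z. \<phi> z t) holomorphic_on RHP"
    using hf unfolding assoc_herglotz_vf_def by blast
  have h2: "\<forall>t\<ge>0. \<forall>\<zeta>\<in>RHP. AE s in lborel. s \<in> {0..t} \<longrightarrow>
        ((\<lambda>r. v r t \<zeta>) has_vector_derivative \<phi> (v s t \<zeta>) s) (at s within {0..t})"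
    using hf unfolding assoc_herglotz_vf_def by blast
  have cI: "countable (\<rat> \<times> \<rat> :: (real \<times> real) set)"
    by (intro countable_SIGMA countable_rat)
  have h3: "AE s in lborel. \<forall>p\<in>\<rat> \<times> \<rat>. (fst p \<ge> 0 \<and> snd p > 0) \<longrightarrow> s \<in> {0..fst p} \<longrightarrow>
        ((\<lambda>r. v r (fst p) (of_real (snd p))) has_vector_derivative \<phi> (v s (fst p) (of_real (snd p))) s)
          (at s within {0..fst p})"
  proof (rule AE_ball_countable'[OF _ cI])
    fix p :: "real \<times> real"
    show "AE s in lborel. (fst p \<ge> 0 \<and> snd p > 0) \<longrightarrow> s \<in> {0..fst p} \<longrightarrow>
        ((\<lambda>r. v r (fst p) (of_real (snd p))) has_vector_derivative \<phi> (v s (fst p) (of_real (snd p))) s)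
          (at s within {0..fst p})"
    proof (cases "fst p \<ge> 0 \<and> snd p > 0")
      case True
      then have "AE s in lborel. s \<in> {0..fst p} \<longrightarrow>
        ((\<lambda>r. v r (fst p) (of_real (snd p))) has_vector_derivative \<phi> (v s (fst p) (of_real (snd p))) s)
          (at s within {0..fst p})"
        using h2 of_real_pos_RHP[of "snd p"] by blast
      then show ?thesis by (rule eventually_mono) simp
    next
      case False
      then show ?thesis by (intro AE_I2) blast
    qed
  qed
  show ?thesis using h1 h3
  proof eventually_elim
    case (elim s)
    show ?case
    proof
      assume s: "s > 0"
      show "phi2_inf \<phi> s \<ge> 0 \<and> (\<forall>w>0. Re (\<phi> (of_real w) s) \<ge> phi2_inf \<phi> s * w^2 / 2)"
      proof (rule struct_at[OF s])
        show "(\<lambda>z. \<phi> z s) holomorphic_on RHP" using elim(1) s by simp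
        show "\<forall>t q. t \<in> \<rat> \<longrightarrow> q \<in> \<rat> \<longrightarrow> s < t \<longrightarrow> q > 0 \<longrightarrow>
          ((\<lambda>r. v r t (of_real q)) has_vector_derivative \<phi> (v s t (of_real q)) s) (at s within {0..t})"
        proof (intro allI impI)
          fix t q :: real assume tq: "t \<in> \<rat>" "q \<in> \<rat>" "s < t" "q > 0"
          have "(t, q) \<in> \<rat> \<times> \<rat>" using tq by simp
          then show "((\<lambda>r. v r t (of_real q)) has_vector_derivative \<phi> (v s t (of_real q)) s) (at s within {0..t})"
            using elim(2) tq s by fastforce
        qed
      qed
    qed
  qed
qed

lemma stepC:
  assumes s: "0 \<le> s" "s < a" "a \<le> T" and th: "\<theta> > 0"
  shows "(\<integral>\<^sup>+ r. indicator {a..T} r * ennreal (phi2_inf \<phi> r / 2) \<partial>lborel) \<le> ennreal (1 / gg s T \<theta>)"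
proof -
  define G where "G = (\<lambda>r. gg r T \<theta>)"
  have Gpos: "G r > 0" if "0 \<le> r" "r \<le> T" for r using gg_pos[OF that th] unfolding G_def .
  have Gmono: "G r \<le> G r'" if "0 \<le> r" "r \<le> r'" "r' \<le> T" for r r'
  proof -
    have "G r = gg r r' (G r')" unfolding G_def using gg_comp[of r r' T \<theta>] that th by simp
    also have "\<dots> \<le> G r'" using gg_le[of r r' "G r'"] Gpos[of r'] that by simp
    finally show ?thesis .
  qed
  define cl where "cl = (\<lambda>x. max s (min x T))"
  have cl: "s \<le> cl x" "cl x \<le> T" for x unfolding cl_def using s by auto
  have clm: "x \<le> y \<Longrightarrow> cl x \<le> cl y" for x y unfolding cl_def by auto
  define H where "H = (\<lambda>x. 1 / G (cl x))"
  have Hanti: "H y \<le> H x" if "x \<le> y" for x y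
  proof -
    have c0: "0 \<le> cl x" using cl[of x] s by linarith
    have "G (cl x) \<le> G (cl y)" using Gmono[OF c0 clm[OF that] cl(2)[of y]] .
    moreover have "G (cl x) > 0" using Gpos cl s by (meson order_trans)
    ultimately show ?thesis unfolding H_def by (simp add: frac_le)
  qed
  have Hnn: "H x \<ge> 0" for x using Gpos[of "cl x"] cl s unfolding H_def by (meson order_trans less_imp_le zero_le_divide_1_iff)
  have cls: "cl s = s" unfolding cl_def using s by simp
  have Hb: "H x \<le> 1 / G s" for x
  proof -
    have "H x \<le> H s" if "s \<le> x" using Hanti that by simp
    moreover have "H x = H s" if "x \<le> s" using that unfolding H_def cl_def using s by (simp add: max_def min_def)
    ultimately show ?thesis unfolding H_def cls by (cases "s \<le> x") auto
  qed
  have Hm: "H \<in> borel_measurable borel" by (rule antimono_borel[OF Hanti])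
  define u where "u = (\<lambda>n r. indicator {a..T} r *
     ennreal ((H (r - inverse (real (Suc n))) - H r) / inverse (real (Suc n))))"
  have um: "u n \<in> borel_measurable lborel" for n unfolding u_def using Hm by measurable
  have ubound: "integral\<^sup>N lborel (u n) \<le> ennreal (1 / G s)" for n
    unfolding u_def by (rule mono_shift_bound[OF Hanti Hnn Hb]) (use s in auto)
  have fatou: "(\<integral>\<^sup>+ r. liminf (\<lambda>n. u n r) \<partial>lborel) \<le> ennreal (1 / G s)"
  proof -
    have "(\<integral>\<^sup>+ r. liminf (\<lambda>n. u n r) \<partial>lborel) \<le> liminf (\<lambda>n. integral\<^sup>N lborel (u n))"
      by (rule nn_integral_liminf[OF um])
    also have "\<dots> \<le> ennreal (1 / G s)"
      by (rule Liminf_le) (use ubound in auto)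
    finally show ?thesis .
  qed
  have hder: "AE r in lborel. r \<in> {0..T} \<longrightarrow>
        ((\<lambda>r. v r T (of_real \<theta>)) has_vector_derivative \<phi> (v r T (of_real \<theta>)) r) (at r within {0..T})"
  proof -
    have T0: "T \<ge> 0" using s by linarith
    show ?thesis using hf of_real_pos_RHP[OF th] T0 unfolding assoc_herglotz_vf_def by blast
  qed
  have pw: "AE r in lborel. indicator {a..T} r * ennreal (phi2_inf \<phi> r / 2) \<le> liminf (\<lambda>n. u n r)"
    using good_AE hder AE_lborel_singleton[of a] AE_lborel_singleton[of T]
  proof eventually_elim
    case (elim r)
    show ?case
    proof (cases "r \<in> {a..T}")
      case False then show ?thesis by simp
    next
      case True
      hence r: "a < r" "r < T" using elim(3,4) by auto
      have r0: "0 < r" using r s by simp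
      have int: "at r within {0..T} = at r" by (rule at_within_interior) (use r r0 in simp)
      have vd: "((\<lambda>r. v r T (of_real \<theta>)) has_vector_derivative \<phi> (v r T (of_real \<theta>)) r) (at r)"
        using elim(2) r r0 int by simp
      define G' where "G' = Re (\<phi> (of_real (G r)) r)"
      have vr: "v r T (of_real \<theta>) = of_real (G r)" unfolding G_def using vreal[of r T \<theta>] r r0 th by simp
      have dG: "(G has_real_derivative G') (at r)"
        using bounded_linear.has_vector_derivative[OF bounded_linear_Re vd] vr
        unfolding G_def G'_def gg_def by (simp add: has_real_derivative_iff_has_vector_derivative)
      have Gr: "G r > 0" using Gpos r r0 by simp
      have dinv: "((\<lambda>x. inverse (G x)) has_real_derivative - (G' * inverse (G r ^ Suc (Suc 0)))) (at r)"
        using DERIV_inverse_fun[OF dG] Gr by simp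
      have dH: "(H has_real_derivative - (G' * inverse (G r ^ Suc (Suc 0)))) (at r)"
      proof (rule has_field_derivative_transform_within_open[OF dinv, of "{s<..<T}"])
        show "open {s<..<T}" by simp
        show "r \<in> {s<..<T}" using r s by simp
        fix x :: real assume "x \<in> {s<..<T}"
        then have "cl x = x" unfolding cl_def by simp
        then show "inverse (G x) = H x" unfolding H_def by (simp add: divide_inverse)
      qed
      have sq: "(\<lambda>n. real (Suc n) * (H r - H (r - inverse (real (Suc n)))))
          \<longlonglongrightarrow> - (G' * inverse (G r ^ Suc (Suc 0)))"
        by (rule seq_left_deriv[OF dH])
      have eqs: "(H (r - inverse (real (Suc n))) - H r) / inverse (real (Suc n))
          = - (real (Suc n) * (H r - H (r - inverse (real (Suc n)))))" for n
        by (simp add: field_simps)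
      have "(\<lambda>n. (H (r - inverse (real (Suc n))) - H r) / inverse (real (Suc n)))
          \<longlonglongrightarrow> G' * inverse (G r ^ Suc (Suc 0))"
        unfolding eqs using tendsto_minus[OF sq] by simp
      hence "(\<lambda>n. u n r) \<longlonglongrightarrow> ennreal (G' * inverse (G r ^ Suc (Suc 0)))"
        unfolding u_def using True by (simp add: tendsto_ennrealI)
      hence lim: "liminf (\<lambda>n. u n r) = ennreal (G' * inverse (G r ^ Suc (Suc 0)))"
        by (rule lim_imp_Liminf[OF trivial_limit_sequentially])
      have st: "Re (\<phi> (of_real (G r)) r) \<ge> phi2_inf \<phi> r * (G r)^2 / 2"
        using elim(1) r0 Gr by blast
      have "phi2_inf \<phi> r / 2 \<le> G' * inverse (G r ^ Suc (Suc 0))"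
      proof -
        have "G r ^ Suc (Suc 0) > 0" using Gr by simp
        moreover have "phi2_inf \<phi> r / 2 * G r ^ Suc (Suc 0) \<le> G'"
          using st unfolding G'_def by (simp add: power2_eq_square)
        ultimately show ?thesis by (simp add: field_simps)
      qed
      then show ?thesis using True lim by (simp add: ennreal_leI)
    qed
  qed
  have "(\<integral>\<^sup>+ r. indicator {a..T} r * ennreal (phi2_inf \<phi> r / 2) \<partial>lborel)
      \<le> (\<integral>\<^sup>+ r. liminf (\<lambda>n. u n r) \<partial>lborel)"
    by (rule nn_integral_mono_AE[OF pw])
  also have "\<dots> \<le> ennreal (1 / G s)" by (rule fatou)
  finally show ?thesis unfolding G_def .
qed

end

lemma simple_bounded:
  assumes sf: "simple_function lborel g" and fin: "\<And>t. g t < \<infinity>"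
  obtains m :: real where "m \<ge> 0" "\<And>t. g t \<le> ennreal m"
proof -
  have finr: "finite (g ` UNIV)" using simple_functionD(1)[OF sf] by simp
  define m where "m = Max (insert 0 (enn2real ` g ` UNIV))"
  have m0: "m \<ge> 0" unfolding m_def using finr by simp
  have "g t \<le> ennreal m" for t
  proof -
    have "g t = ennreal (enn2real (g t))" using fin[of t] by (simp add: ennreal_enn2real_if less_top)
    moreover have "enn2real (g t) \<le> m" unfolding m_def using finr by (intro Max_ge) auto
    ultimately show ?thesis by (metis ennreal_leI)
  qed
  then show ?thesis using that m0 by blast
qed

lemma mono_lim_ennreal:
  fixes f :: "real \<Rightarrow> ennreal"
  assumes mono: "\<And>x y. 0 < x \<Longrightarrow> x \<le> y \<Longrightarrow> f x \<le> f y"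
  shows "(f \<longlongrightarrow> (SUP x\<in>{0<..}. f x)) at_top"
proof (rule order_tendstoI)
  fix a assume "a < (SUP x\<in>{0<..}. f x)"
  then obtain x0 where x0: "x0 > 0" "a < f x0" by (auto simp: less_SUP_iff)
  show "eventually (\<lambda>y. a < f y) at_top"
    using eventually_ge_at_top[of x0] by eventually_elim (use mono x0 in \<open>force intro: less_le_trans\<close>)
next
  fix a assume a: "(SUP x\<in>{0<..}. f x) < a"
  show "eventually (\<lambda>y. f y < a) at_top"
    using eventually_gt_at_top[of 0]
  proof eventually_elim
    case (elim y)
    have "f y \<le> (SUP x\<in>{0<..}. f x)" using elim by (intro SUP_upper) auto
    thus ?case using a by simp
  qed
qed

context fam begin

lemma vbound:
  assumes int: "(\<integral>\<^sup>+ t\<in>{0..}. ennreal (phi2_inf \<phi> t) \<partial>lborel) = \<infinity>"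
    and s: "s \<ge> 0" and e: "e > 0"
  shows "\<exists>U. \<forall>T\<ge>U. \<forall>\<theta>>0. gg s T \<theta> \<le> e"
proof -
  define c where "c = phi2_inf \<phi>"
  define f where "f = (\<lambda>t. ennreal (c t) * indicator {0..} t)"
  have intf: "integral\<^sup>N lborel f = \<infinity>" using int unfolding f_def c_def by simp
  define B0 where "B0 = 1 / gg 0 (s + 1) 1"
  have B0: "B0 \<ge> 0" unfolding B0_def using gg_pos[of 0 "s+1" 1] s by simp
  define A where "A = 1 / e + 1 + B0"
  have "ennreal (2 * (A + 1)) < integral\<^sup>N lborel f" using intf by simp
  then obtain g where g: "simple_function lborel g" "g \<le> f" "ennreal (2 * (A + 1)) < integral\<^sup>S lborel g"
    unfolding nn_integral_def by (auto simp: less_SUP_iff)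
  have gm: "g \<in> borel_measurable lborel" using borel_measurable_simple_function[OF g(1)] .
  have gle: "g t \<le> ennreal (c t) * indicator {0..} t" for t using g(2) unfolding f_def le_fun_def by blast
  have gfin: "g t < \<infinity>" for t using gle[of t] by (auto simp: indicator_def intro: le_less_trans)
  obtain m where m: "m \<ge> 0" "\<And>t. g t \<le> ennreal m" using simple_bounded[OF g(1) gfin] by blast
  define g' where "g' = (\<lambda>t. ennreal (1/2) * g t)"
  have g'm: "g' \<in> borel_measurable lborel" unfolding g'_def using gm by measurable
  have g'le: "g' t \<le> indicator {0..} t * ennreal (c t / 2)" for t
  proof -
    have "g' t \<le> ennreal (1/2) * (ennreal (c t) * indicator {0..} t)"
      unfolding g'_def by (rule mult_left_mono[OF gle]) simp
    also have "\<dots> = indicator {0..} t * ennreal (c t / 2)"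
      using ennreal_mult'[of "1/2" "c t"] by (simp add: indicator_def)
    finally show ?thesis .
  qed
  have g'0: "g' t = 0" if "t < 0" for t using g'le[of t] that by (simp add: indicator_def)
  have g'int: "ennreal (A + 1) < integral\<^sup>N lborel g'"
  proof -
    have "integral\<^sup>N lborel g' = ennreal (1/2) * integral\<^sup>N lborel g"
      unfolding g'_def by (rule nn_integral_cmult[OF gm])
    also have "integral\<^sup>N lborel g = integral\<^sup>S lborel g" by (rule nn_integral_eq_simple_integral[OF g(1)])
    finally have i1: "integral\<^sup>N lborel g' = ennreal (1/2) * integral\<^sup>S lborel g" .
    have i2: "ennreal (1/2) * ennreal (2 * (A + 1)) < ennreal (1/2) * integral\<^sup>S lborel g"
      by (rule ennreal_mult_strict_left_mono[OF g(3)])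
        (rule ennreal_less_zero_iff[THEN iffD2], simp, rule ennreal_less_top)
    have i3: "ennreal (1/2) * ennreal (2 * (A + 1)) = ennreal (A + 1)"
    proof -
      have "ennreal (1/2) * ennreal (2 * (A + 1)) = ennreal (1/2 * (2 * (A + 1)))"
        by (rule ennreal_mult'[symmetric]) simp
      also have "1/2 * (2 * (A + 1)) = A + 1" by simp
      finally show ?thesis .
    qed
    show ?thesis using i2 unfolding i1 i3 .
  qed
  define \<eta> where "\<eta> = min (s + 1) (1 / (m + 1))"
  have \<eta>: "\<eta> > 0" "\<eta> \<le> s + 1" "\<eta> * m \<le> 1" unfolding \<eta>_def using s m(1)
    by (auto simp: min_def field_simps)
  have m1: "(\<lambda>t. g' t * indicator {..<\<eta>} t) \<in> borel_measurable lborel" using g'm by measurable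
  have m2: "(\<lambda>t. g' t * indicator {\<eta>..} t) \<in> borel_measurable lborel" using g'm by measurable
  have m3: "(\<lambda>t. g' t * indicator {\<eta>..real N} t) \<in> borel_measurable lborel" for N :: nat using g'm by measurable
  have split1: "integral\<^sup>N lborel g' = (\<integral>\<^sup>+ t. g' t * indicator {..<\<eta>} t \<partial>lborel) + (\<integral>\<^sup>+ t. g' t * indicator {\<eta>..} t \<partial>lborel)"
  proof -
    have "integral\<^sup>N lborel g' = (\<integral>\<^sup>+ t. g' t * indicator {..<\<eta>} t + g' t * indicator {\<eta>..} t \<partial>lborel)"
      by (rule nn_integral_cong) (auto simp: indicator_def)
    also have "\<dots> = (\<integral>\<^sup>+ t. g' t * indicator {..<\<eta>} t \<partial>lborel) + (\<integral>\<^sup>+ t. g' t * indicator {\<eta>..} t \<partial>lborel)"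
      by (rule nn_integral_add[OF m1 m2])
    finally show ?thesis .
  qed
  have small: "(\<integral>\<^sup>+ t. g' t * indicator {..<\<eta>} t \<partial>lborel) \<le> 1"
  proof -
    have "(\<integral>\<^sup>+ t. g' t * indicator {..<\<eta>} t \<partial>lborel) \<le> (\<integral>\<^sup>+ t. ennreal m * indicator {0..\<eta>} t \<partial>lborel)"
    proof (rule nn_integral_mono)
      fix t
      show "g' t * indicator {..<\<eta>} t \<le> ennreal m * indicator {0..\<eta>} t"
      proof (cases "t < 0")
        case True thus ?thesis using g'0 by simp
      next
        case False
        have h1: "ennreal (1/2) \<le> ennreal 1" by (rule ennreal_leI) simp
        have "g' t \<le> ennreal 1 * g t" unfolding g'_def by (rule mult_right_mono[OF h1]) simp
        hence "g' t \<le> g t" by simp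
        also have "\<dots> \<le> ennreal m" by (rule m(2))
        finally show ?thesis using False by (auto simp: indicator_def)
      qed
    qed
    also have "\<dots> = ennreal m * emeasure lborel {0..\<eta>}" by (rule nn_integral_cmult_indicator) simp
    also have "\<dots> = ennreal (m * \<eta>)" using \<eta> m by (simp add: ennreal_mult)
    also have "\<dots> \<le> 1" using \<eta> by (simp add: mult.commute)
    finally show ?thesis .
  qed
  have tail: "ennreal A < (\<integral>\<^sup>+ t. g' t * indicator {\<eta>..} t \<partial>lborel)"
  proof (rule ccontr)
    assume "\<not> ?thesis"
    hence "(\<integral>\<^sup>+ t. g' t * indicator {\<eta>..} t \<partial>lborel) \<le> ennreal A" by simp
    hence "integral\<^sup>N lborel g' \<le> 1 + ennreal A" unfolding split1 by (rule add_mono[OF small])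
    also have "\<dots> = ennreal (A + 1)"
    proof -
      have A0: "A \<ge> 0" using B0 e unfolding A_def by simp
      have "ennreal (A + 1) = ennreal A + ennreal 1" by (rule ennreal_plus) (use A0 in auto)
      thus ?thesis by (simp add: add.commute)
    qed
    finally show False using g'int by simp
  qed
  have mc: "(\<integral>\<^sup>+ t. g' t * indicator {\<eta>..} t \<partial>lborel) = (SUP N. \<integral>\<^sup>+ t. g' t * indicator {\<eta>..real N} t \<partial>lborel)"
  proof -
    have inc: "incseq (\<lambda>N t. g' t * indicator {\<eta>..real N} t)"
      by (auto simp: incseq_def le_fun_def indicator_def intro!: mult_left_mono)
    have pw: "(SUP N. g' t * indicator {\<eta>..real N} t) = g' t * indicator {\<eta>..} t" for t
    proof (cases "\<eta> \<le> t")
      case True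
      obtain N0 :: nat where N0: "t \<le> real N0" using real_arch_simple by blast
      have "(SUP N. g' t * indicator {\<eta>..real N} t) \<le> g' t"
        by (rule SUP_least) (auto simp: indicator_def)
      moreover have "g' t \<le> (SUP N. g' t * indicator {\<eta>..real N} t)"
        using True N0 by (intro SUP_upper2[of N0]) (auto simp: indicator_def)
      ultimately show ?thesis using True by (auto simp: indicator_def)
    next
      case False thus ?thesis by (simp add: indicator_def)
    qed
    have "(\<integral>\<^sup>+ t. (SUP N. g' t * indicator {\<eta>..real N} t) \<partial>lborel) = (SUP N. \<integral>\<^sup>+ t. g' t * indicator {\<eta>..real N} t \<partial>lborel)"
      by (rule nn_integral_monotone_convergence_SUP[OF inc m3])
    then show ?thesis unfolding pw .
  qed
  obtain N :: nat where N: "ennreal A < (\<integral>\<^sup>+ t. g' t * indicator {\<eta>..real N} t \<partial>lborel)"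
    using tail unfolding mc by (auto simp: less_SUP_iff)
  have m4: "(\<lambda>t. g' t * indicator {\<eta>..s+1} t) \<in> borel_measurable lborel" using g'm by measurable
  have m5: "(\<lambda>t. g' t * indicator {s+1..real N} t) \<in> borel_measurable lborel" using g'm by measurable
  have split2: "(\<integral>\<^sup>+ t. g' t * indicator {\<eta>..real N} t \<partial>lborel)
      \<le> (\<integral>\<^sup>+ t. g' t * indicator {\<eta>..s+1} t \<partial>lborel) + (\<integral>\<^sup>+ t. g' t * indicator {s+1..real N} t \<partial>lborel)"
  proof -
    have "(\<integral>\<^sup>+ t. g' t * indicator {\<eta>..real N} t \<partial>lborel)
        \<le> (\<integral>\<^sup>+ t. g' t * indicator {\<eta>..s+1} t + g' t * indicator {s+1..real N} t \<partial>lborel)"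
      by (rule nn_integral_mono) (auto simp: indicator_def)
    also have "\<dots> = (\<integral>\<^sup>+ t. g' t * indicator {\<eta>..s+1} t \<partial>lborel) + (\<integral>\<^sup>+ t. g' t * indicator {s+1..real N} t \<partial>lborel)"
      by (rule nn_integral_add[OF m4 m5])
    finally show ?thesis .
  qed
  have stepC0: "(\<integral>\<^sup>+ t. g' t * indicator {\<eta>..s+1} t \<partial>lborel) \<le> ennreal B0"
  proof -
    have "(\<integral>\<^sup>+ t. g' t * indicator {\<eta>..s+1} t \<partial>lborel) \<le> (\<integral>\<^sup>+ t. indicator {\<eta>..s+1} t * ennreal (c t / 2) \<partial>lborel)"
    proof (rule nn_integral_mono)
      fix t
      show "g' t * indicator {\<eta>..s+1} t \<le> indicator {\<eta>..s+1} t * ennreal (c t / 2)"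
        using g'le[of t] \<eta> by (auto simp: indicator_def)
    qed
    also have "\<dots> \<le> ennreal B0" unfolding c_def B0_def using stepC[of 0 \<eta> "s+1" 1] \<eta> by simp
    finally show ?thesis .
  qed
  have Z: "ennreal (1 / e) < (\<integral>\<^sup>+ t. g' t * indicator {s+1..real N} t \<partial>lborel)"
  proof (rule ccontr)
    assume "\<not> ?thesis"
    hence "(\<integral>\<^sup>+ t. g' t * indicator {s+1..real N} t \<partial>lborel) \<le> ennreal (1 / e)" by simp
    hence "(\<integral>\<^sup>+ t. g' t * indicator {\<eta>..s+1} t \<partial>lborel) + (\<integral>\<^sup>+ t. g' t * indicator {s+1..real N} t \<partial>lborel) \<le> ennreal B0 + ennreal (1/e)"
      by (rule add_mono[OF stepC0])
    with split2 have "(\<integral>\<^sup>+ t. g' t * indicator {\<eta>..real N} t \<partial>lborel) \<le> ennreal B0 + ennreal (1/e)"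
      by (rule order_trans)
    also have "\<dots> = ennreal (B0 + 1/e)" by (rule ennreal_plus[symmetric]) (use B0 e in auto)
    also have "\<dots> \<le> ennreal A" unfolding A_def by (rule ennreal_leI) simp
    finally show False using N by simp
  qed
  show ?thesis
  proof (intro exI[of _ "max (real N) (s + 1)"] allI impI)
    fix T \<theta> :: real assume T: "max (real N) (s + 1) \<le> T" and th: "\<theta> > 0"
    have "(\<integral>\<^sup>+ t. g' t * indicator {s+1..real N} t \<partial>lborel) \<le> (\<integral>\<^sup>+ t. indicator {s+1..T} t * ennreal (c t / 2) \<partial>lborel)"
    proof (rule nn_integral_mono)
      fix t
      show "g' t * indicator {s+1..real N} t \<le> indicator {s+1..T} t * ennreal (c t / 2)"
        using g'le[of t] T s by (auto simp: indicator_def)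
    qed
    also have "\<dots> \<le> ennreal (1 / gg s T \<theta>)" unfolding c_def using stepC[of s "s+1" T \<theta>] s T th by simp
    finally have "ennreal (1 / e) < ennreal (1 / gg s T \<theta>)" using Z by simp
    hence "1 / e < 1 / gg s T \<theta>" using e by (simp add: ennreal_less_iff)
    moreover have "gg s T \<theta> > 0" using gg_pos[of s T \<theta>] s T th by simp
    ultimately show "gg s T \<theta> \<le> e" using e by (simp add: frac_less2 divide_less_cancel field_simps)
  qed
qed

lemma part1:
  assumes int: "(\<integral>\<^sup>+ t\<in>{0..}. ennreal (phi2_inf \<phi> t) \<partial>lborel) = \<infinity>" and s: "s \<ge> 0"
  shows "((\<lambda>t. v_inf v s t) \<longlongrightarrow> 0) at_top"
proof -
  have vinf: "v_inf v s T = (SUP x\<in>{0<..}. ennreal (gg s T x))" if T: "T \<ge> s" for T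
  proof -
    have "((\<lambda>\<theta>. ennreal (gg s T \<theta>)) \<longlongrightarrow> (SUP x\<in>{0<..}. ennreal (gg s T x))) at_top"
      by (rule mono_lim_ennreal) (use gg_mono[of s T] s T in \<open>auto intro: ennreal_leI\<close>)
    then show ?thesis unfolding v_inf_def gg_def[symmetric]
      using tendsto_Lim[OF trivial_limit_at_top_linorder] by blast
  qed
  show ?thesis
  proof (rule order_tendstoI)
    fix a :: ennreal assume "a < 0" thus "eventually (\<lambda>t. a < v_inf v s t) at_top" by simp
  next
    fix a :: ennreal assume a: "0 < a"
    obtain e :: real where e: "e > 0" "ennreal e < a"
    proof (cases "a = \<infinity>")
      case True thus ?thesis using that[of 1] by simp
    next
      case False
      then have "a = ennreal (enn2real a)" by (simp add: ennreal_enn2real_if)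
      moreover have "enn2real a > 0" using a False by (simp add: enn2real_positive_iff less_top)
      ultimately show ?thesis using that[of "enn2real a / 2"] by (metis ennreal_less_iff half_gt_zero less_imp_le field_sum_of_halves less_add_same_cancel1)
    qed
    obtain U where U: "\<forall>T\<ge>U. \<forall>\<theta>>0. gg s T \<theta> \<le> e" using vbound[OF int s e(1)] by blast
    show "eventually (\<lambda>t. v_inf v s t < a) at_top"
      using eventually_ge_at_top[of "max U s"]
    proof eventually_elim
      case (elim T)
      have vT: "v_inf v s T = (SUP x\<in>{0<..}. ennreal (gg s T x))" using vinf[of T] elim by simp
      have "(SUP x\<in>{0<..}. ennreal (gg s T x)) \<le> ennreal e" using elim U
        by (intro SUP_least ennreal_leI) auto
      hence "v_inf v s T \<le> ennreal e" unfolding vT .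
      thus ?case using e by simp
    qed
  qed
qed

end

lemma kernel_zero_bound:
  assumes lk: "laplace_kernels v k" and su: "0 \<le> s" "s \<le> u" and x: "x > 0" and e: "e > 0"
    and vb: "\<forall>\<theta>>0. Re (v s u (of_real \<theta>)) \<le> e"
  shows "ennreal (exp (- x * e)) \<le> emeasure (k s u (ennreal x)) {0}"
proof -
  define K where "K = k s u (ennreal x)"
  have K: "prob_space K" "sets K = sets borel" using lk su unfolding laplace_kernels_def K_def by auto
  define f where "f = (\<lambda>n y. indicator {..<\<infinity>} y * ennreal (exp (- real (Suc n) * enn2real (y::ennreal))))"
  have lap: "integral\<^sup>N K (f n) = ennreal (exp (- x * Re (v s u (of_real (real (Suc n))))))" for n
  proof -
    have "\<forall>x::real\<ge>0. \<forall>\<theta>::real>0.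
           (\<integral>\<^sup>+ y. indicator {..<\<infinity>} y * ennreal (exp (- \<theta> * enn2real y)) \<partial>k s u (ennreal x))
             = ennreal (exp (- x * Re (v s u (of_real \<theta>))))"
      using lk su unfolding laplace_kernels_def by blast
    note h = this
    show ?thesis unfolding f_def K_def by (rule h[rule_format]) (use x in auto)
  qed
  have lapge: "ennreal (exp (- x * e)) \<le> integral\<^sup>N K (f n)" for n
  proof -
    have "Re (v s u (of_real (real (Suc n)))) \<le> e" by (rule vb[rule_format]) simp
    hence "- x * e \<le> - x * Re (v s u (of_real (real (Suc n))))" using x by simp
    thus ?thesis unfolding lap by (intro ennreal_leI) simp
  qed
  have fmb: "f n \<in> borel_measurable borel" for n unfolding f_def by measurable
  have fm: "f n \<in> borel_measurable K" for n using fmb[of n] measurable_cong_sets[OF K(2) refl] by blast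
  have dec: "antimono_on UNIV f"
  proof (rule monotone_onI)
    fix n m :: nat assume "n \<le> m"
    show "f n \<ge> f m" unfolding le_fun_def f_def
    proof
      fix y :: ennreal
      have "exp (- real (Suc m) * enn2real y) \<le> exp (- real (Suc n) * enn2real y)"
        using \<open>n \<le> m\<close> by (simp add: mult_right_mono enn2real_nonneg)
      thus "indicator {..<\<infinity>} y * ennreal (exp (- real (Suc m) * enn2real y))
          \<le> indicator {..<\<infinity>} y * ennreal (exp (- real (Suc n) * enn2real y))"
        by (intro mult_left_mono ennreal_leI) auto
    qed
  qed
  have fin: "integral\<^sup>N K (f 0) < \<infinity>" unfolding lap by simp
  have pw: "(INF n. f n y) = indicator {0} y" for y
  proof -
    have lim1: "(\<lambda>n. f n y) \<longlonglongrightarrow> (INF n. f n y)"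
    proof -
      have "antimono_on UNIV (\<lambda>n. f n y)"
      proof (rule monotone_onI)
        fix n m :: nat assume nm: "n \<le> m"
        have "f m \<le> f n" using monotone_onD[OF dec _ _ nm] by simp
        then show "f n y \<ge> f m y" by (simp add: le_fun_def)
      qed
      from LIMSEQ_INF[OF this] show ?thesis by simp
    qed
    show ?thesis
    proof (cases "y = 0")
      case True then show ?thesis unfolding f_def by simp
    next
      case False
      show ?thesis
      proof (cases "y = \<infinity>")
        case True then show ?thesis unfolding f_def by simp
      next
        case fin: False
        have t: "enn2real y > 0" using False fin by (simp add: enn2real_positive_iff less_top zero_less_iff_neq_zero)
        have "(\<lambda>n. exp (- real (Suc n) * enn2real y)) \<longlonglongrightarrow> 0"
        proof -
          have "filterlim (\<lambda>n. real (Suc n) * enn2real y) at_top sequentially"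
          proof -
            have r: "filterlim (\<lambda>n. real (Suc n)) at_top sequentially"
              using filterlim_compose[OF filterlim_real_sequentially filterlim_Suc] by (simp add: o_def)
            show ?thesis by (rule filterlim_at_top_mult_tendsto_pos[OF tendsto_const t r])
          qed
          hence "filterlim (\<lambda>n. - (real (Suc n) * enn2real y)) at_bot sequentially"
            by (simp add: filterlim_uminus_at_top)
          from filterlim_compose[OF exp_at_bot this]
          have "(\<lambda>n. exp (- (real (Suc n) * enn2real y))) \<longlonglongrightarrow> 0" by (simp only: o_def)
          then show ?thesis by (simp only: mult_minus_left)
        qed
        hence "(\<lambda>n. ennreal (exp (- real (Suc n) * enn2real y))) \<longlonglongrightarrow> ennreal 0"
          by (rule tendsto_ennrealI)
        moreover have "f n y = ennreal (exp (- real (Suc n) * enn2real y))" for n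
          unfolding f_def using fin by (simp add: less_top[symmetric])
        ultimately have "(\<lambda>n. f n y) \<longlonglongrightarrow> ennreal 0" by simp
        hence "(INF n. f n y) = 0" using LIMSEQ_unique[OF lim1] by simp
        then show ?thesis using False by simp
      qed
    qed
  qed
  have "emeasure K {0} = integral\<^sup>N K (indicator {0})"
    using K(2) by (simp add: nn_integral_indicator)
  also have "\<dots> = (\<integral>\<^sup>+ y. (INF n. f n y) \<partial>K)" unfolding pw ..
  also have "\<dots> = (INF n. integral\<^sup>N K (f n))"
    by (rule nn_integral_monotone_convergence_INF_decseq[OF dec fm fin])
  finally have "emeasure K {0} = (INF n. integral\<^sup>N K (f n))" .
  moreover have "ennreal (exp (- x * e)) \<le> (INF n. integral\<^sup>N K (f n))"
    by (rule INF_greatest) (rule lapge)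
  ultimately show ?thesis unfolding K_def by simp
qed

lemma part2:
  fixes P :: "real \<Rightarrow> ennreal \<Rightarrow> 'w measure" and Z :: "real \<Rightarrow> 'w \<Rightarrow> ennreal"
  assumes bp: "branching_process v P Z" and s: "s \<ge> 0" and x: "x > 0"
    and vb: "\<And>e. e > 0 \<Longrightarrow> \<exists>u\<ge>s. \<forall>\<theta>>0. Re (v s u (of_real \<theta>)) \<le> e"
  shows "measure (P s (ennreal x)) {\<omega>\<in>space (P s (ennreal x)). extinction_time Z s \<omega> < \<infinity>} = 1"
proof -
  obtain k where lk: "laplace_kernels v k"
      and kset: "\<forall>s s' x x'. sets (P s x) = sets (P s' x')"
      and kpr: "\<forall>s x. prob_space (P s x) \<and> (\<forall>t. Z t \<in> borel_measurable (P s x)) \<and>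
              (\<forall>\<omega>\<in>space (P s x). (\<lambda>t. Z t \<omega>) \<in> Dpaths)"
      and kin: "\<forall>s\<ge>0. \<forall>x. AE \<omega> in P s x. Z s \<omega> = x"
      and kmk: "\<forall>s x t u B A. 0 \<le> s \<and> s \<le> t \<and> t \<le> u \<and> B \<in> sets borel \<and>
          A \<in> sigma_sets (space (P s x))
                 {{\<omega>\<in>space (P s x). Z r \<omega> \<in> C} | r C. r \<in> {s..t} \<and> C \<in> sets borel} \<longrightarrow>
          emeasure (P s x) (A \<inter> {\<omega>\<in>space (P s x). Z u \<omega> \<in> B})
            = (\<integral>\<^sup>+\<omega>\<in>A. emeasure (k t u (Z t \<omega>)) B \<partial>P s x)"
    using bp unfolding branching_process_def by (elim exE conjE) (rule that; assumption)
  have ps: "\<And>s x. prob_space (P s x)" using kpr by blast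
  have Zm: "\<And>s x t. Z t \<in> borel_measurable (P s x)" using kpr by blast
  have paths: "\<And>s x \<omega>. \<omega> \<in> space (P s x) \<Longrightarrow> (\<lambda>t. Z t \<omega>) \<in> Dpaths" using kpr by blast
  have init: "\<And>s x. s \<ge> 0 \<Longrightarrow> AE \<omega> in P s x. Z s \<omega> = x" using kin by blast
  have markov: "\<And>s x t u (B :: ennreal set) A. 0 \<le> s \<Longrightarrow> s \<le> t \<Longrightarrow> t \<le> u \<Longrightarrow> B \<in> sets borel \<Longrightarrow>
          A \<in> sigma_sets (space (P s x))
                 {{\<omega>\<in>space (P s x). Z r \<omega> \<in> C} | r C. r \<in> {s..t} \<and> C \<in> sets borel} \<Longrightarrow>
          emeasure (P s x) (A \<inter> {\<omega>\<in>space (P s x). Z u \<omega> \<in> B})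
            = (\<integral>\<^sup>+\<omega>\<in>A. emeasure (k t u (Z t \<omega>)) B \<partial>P s x)"
  proof -
    fix s x t u and B :: "ennreal set" and A
    assume "0 \<le> s" "s \<le> t" "t \<le> u" "B \<in> sets borel"
      "A \<in> sigma_sets (space (P s x))
                 {{\<omega>\<in>space (P s x). Z r \<omega> \<in> C} | r C. r \<in> {s..t} \<and> C \<in> sets borel}"
    then show "emeasure (P s x) (A \<inter> {\<omega>\<in>space (P s x). Z u \<omega> \<in> B})
            = (\<integral>\<^sup>+\<omega>\<in>A. emeasure (k t u (Z t \<omega>)) B \<partial>P s x)"
      using kmk by blast
  qed
  define M where "M = P s (ennreal x)"
  interpret M: prob_space M unfolding M_def by (rule ps)
  define E where "E = {\<omega>\<in>space M. extinction_time Z s \<omega> < \<infinity>}"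
  have zset: "{\<omega>\<in>space M. Z u \<omega> = 0} \<in> sets M" for u
  proof -
    have Zu: "Z u \<in> borel_measurable M" unfolding M_def by (rule Zm)
    have "Z u -` {0} \<inter> space M \<in> sets M" by (rule measurable_sets[OF Zu]) simp
    moreover have "Z u -` {0} \<inter> space M = {\<omega>\<in>space M. Z u \<omega> = 0}" by auto
    ultimately show ?thesis by simp
  qed
  have Eeq: "E = (\<Union>n::nat. {\<omega>\<in>space M. Z (s + real n) \<omega> = 0})"
  proof
    show "E \<subseteq> (\<Union>n::nat. {\<omega>\<in>space M. Z (s + real n) \<omega> = 0})"
    proof
      fix \<omega> assume w: "\<omega> \<in> E"
      hence sp: "\<omega> \<in> space M" and lt: "extinction_time Z s \<omega> < \<infinity>" unfolding E_def by auto
      have "{t. s \<le> t \<and> Z t \<omega> = 0} \<noteq> {}"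
      proof
        assume em: "{t. s \<le> t \<and> Z t \<omega> = 0} = {}"
        have "extinction_time Z s \<omega> = Inf (ereal ` {})" unfolding extinction_time_def em ..
        hence "extinction_time Z s \<omega> = \<infinity>" by (simp add: top_ereal_def)
        thus False using lt by simp
      qed
      then obtain t0 where t0: "s \<le> t0" "Z t0 \<omega> = 0" by auto
      have D: "(\<lambda>t. Z t \<omega>) \<in> Dpaths" using paths sp unfolding M_def by blast
      hence "\<forall>t\<ge>0. Z t \<omega> = 0 \<longrightarrow> (\<forall>u\<ge>t. Z u \<omega> = 0)" unfolding Dpaths_def mem_Collect_eq by (elim conjE)
      hence absorb: "\<forall>u\<ge>t0. Z u \<omega> = 0" using t0 s by (meson order_trans)
      obtain n :: nat where n: "t0 - s \<le> real n" using real_arch_simple by blast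
      have "Z (s + real n) \<omega> = 0" using absorb n by simp
      thus "\<omega> \<in> (\<Union>n::nat. {\<omega>\<in>space M. Z (s + real n) \<omega> = 0})" using sp by auto
    qed
    show "(\<Union>n::nat. {\<omega>\<in>space M. Z (s + real n) \<omega> = 0}) \<subseteq> E"
    proof
      fix \<omega> assume "\<omega> \<in> (\<Union>n::nat. {\<omega>\<in>space M. Z (s + real n) \<omega> = 0})"
      then obtain n :: nat where sp: "\<omega> \<in> space M" and z: "Z (s + real n) \<omega> = 0" by auto
      have "extinction_time Z s \<omega> \<le> ereal (s + real n)"
        unfolding extinction_time_def using z by (intro Inf_lower) auto
      also have "\<dots> < \<infinity>" by simp
      finally show "\<omega> \<in> E" unfolding E_def using sp by simp
    qed
  qed
  have Em: "E \<in> sets M" unfolding Eeq using zset by auto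
  have bound: "exp (- x * e) \<le> measure M E" if e: "e > 0" for e
  proof -
    obtain u where u: "u \<ge> s" "\<forall>\<theta>>0. Re (v s u (of_real \<theta>)) \<le> e" using vb[OF e] by blast
    have k0: "ennreal (exp (- x * e)) \<le> emeasure (k s u (ennreal x)) {0}"
      by (rule kernel_zero_bound[OF lk s u(1) x e u(2)])
    have A: "space M \<in> sigma_sets (space (P s (ennreal x)))
                 {{\<omega>\<in>space (P s (ennreal x)). Z r \<omega> \<in> C} | r C. r \<in> {s..s} \<and> C \<in> sets borel}"
      unfolding M_def by (rule sigma_sets_top)
    have "emeasure M (space M \<inter> {\<omega>\<in>space M. Z u \<omega> \<in> {0}})
        = (\<integral>\<^sup>+\<omega>\<in>space M. emeasure (k s u (Z s \<omega>)) {0} \<partial>M)"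
      using markov[where B="{0}", OF s order_refl u(1) _ A] unfolding M_def by simp
    also have "\<dots> = (\<integral>\<^sup>+\<omega>\<in>space M. emeasure (k s u (ennreal x)) {0} \<partial>M)"
    proof (rule nn_integral_cong_AE)
      show "AE \<omega> in M. emeasure (k s u (Z s \<omega>)) {0} * indicator (space M) \<omega>
          = emeasure (k s u (ennreal x)) {0} * indicator (space M) \<omega>"
        using init[OF s, of "ennreal x"] unfolding M_def by (rule eventually_mono) simp
    qed
    also have "\<dots> = emeasure (k s u (ennreal x)) {0} * emeasure M (space M)"
      by (rule nn_integral_cmult_indicator) simp
    also have "\<dots> = emeasure (k s u (ennreal x)) {0}" by (simp add: M.emeasure_space_1)
    finally have eq: "emeasure M {\<omega>\<in>space M. Z u \<omega> = 0} = emeasure (k s u (ennreal x)) {0}"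
      by (simp add: Int_def)
    have "{\<omega>\<in>space M. Z u \<omega> = 0} \<subseteq> E" unfolding Eeq
    proof
      fix \<omega> assume w: "\<omega> \<in> {\<omega>\<in>space M. Z u \<omega> = 0}"
      have D: "(\<lambda>t. Z t \<omega>) \<in> Dpaths" using paths w unfolding M_def by blast
      hence "\<forall>t\<ge>0. Z t \<omega> = 0 \<longrightarrow> (\<forall>u\<ge>t. Z u \<omega> = 0)" unfolding Dpaths_def mem_Collect_eq by (elim conjE)
      moreover have "Z u \<omega> = 0" "u \<ge> 0" using w u s by auto
      ultimately have absorb: "\<forall>r\<ge>u. Z r \<omega> = 0" by blast
      obtain n :: nat where n: "u - s \<le> real n" using real_arch_simple by blast
      have "Z (s + real n) \<omega> = 0" using absorb n by simp
      thus "\<omega> \<in> (\<Union>n::nat. {\<omega>\<in>space M. Z (s + real n) \<omega> = 0})" using w by auto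
    qed
    hence "emeasure M {\<omega>\<in>space M. Z u \<omega> = 0} \<le> emeasure M E" by (rule emeasure_mono) (rule Em)
    hence "ennreal (exp (- x * e)) \<le> emeasure M E" using eq k0 by simp
    thus ?thesis using M.emeasure_eq_measure[of E] by simp
  qed
  have lim: "(\<lambda>n. exp (- x * inverse (real (Suc n)))) \<longlonglongrightarrow> exp (- x * 0)"
    by (intro tendsto_intros LIMSEQ_inverse_real_of_nat)
  have "1 \<le> measure M E"
    using LIMSEQ_le_const2[OF lim] bound by simp
  moreover have "measure M E \<le> 1" by (rule M.prob_le_1)
  ultimately show ?thesis unfolding E_def M_def by simp
qed

theorem mainTheorem11:
  fixes v :: "real \<Rightarrow> real \<Rightarrow> complex \<Rightarrow> complex"
    and \<phi> :: "complex \<Rightarrow> real \<Rightarrow> complex"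
  assumes "abs_cont_rev_evol_family v"
    and "\<forall>s t. 0 \<le> s \<and> s \<le> t \<longrightarrow> in_BF0 (v s t)"
    and "assoc_herglotz_vf v \<phi>"
    and "(\<integral>\<^sup>+ t\<in>{0..}. ennreal (phi2_inf \<phi> t) \<partial>lborel) = \<infinity>"
  shows "(\<forall>s\<ge>0. ((\<lambda>t. v_inf v s t) \<longlongrightarrow> 0) at_top) \<and>
    (\<forall>(P :: real \<Rightarrow> ennreal \<Rightarrow> 'w measure) Z. branching_process v P Z \<longrightarrow>
       (\<forall>s\<ge>0. \<forall>x::real>0.
          measure (P s (ennreal x)) {\<omega>\<in>space (P s (ennreal x)). extinction_time Z s \<omega> < \<infinity>} = 1))"
proof -
  interpret fam v \<phi> using assms(1-3) by unfold_locales
  have p1: "\<forall>s\<ge>0. ((\<lambda>t. v_inf v s t) \<longlongrightarrow> 0) at_top" using part1[OF assms(4)] by blast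
  have vb: "\<exists>u\<ge>s. \<forall>\<theta>>0. Re (v s u (of_real \<theta>)) \<le> e" if s: "s \<ge> 0" and e: "e > 0" for s e
  proof -
    obtain U where U: "\<forall>T\<ge>U. \<forall>\<theta>>0. gg s T \<theta> \<le> e" using vbound[OF assms(4) s e] by blast
    show ?thesis using U unfolding gg_def by (intro exI[of _ "max U s"]) auto
  qed
  have p2: "\<forall>(P :: real \<Rightarrow> ennreal \<Rightarrow> 'w measure) Z. branching_process v P Z \<longrightarrow>
       (\<forall>s\<ge>0. \<forall>x::real>0.
          measure (P s (ennreal x)) {\<omega>\<in>space (P s (ennreal x)). extinction_time Z s \<omega> < \<infinity>} = 1)"
  proof (intro allI impI)
    fix P :: "real \<Rightarrow> ennreal \<Rightarrow> 'w measure" and Z :: "real \<Rightarrow> 'w \<Rightarrow> ennreal"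
      and s :: real and x :: real
    assume bp: "branching_process v P Z" and s: "s \<ge> 0" and x: "x > 0"
    show "measure (P s (ennreal x)) {\<omega>\<in>space (P s (ennreal x)). extinction_time Z s \<omega> < \<infinity>} = 1"
      by (rule part2[OF bp s x vb[OF s]])
  qed
  show ?thesis using p1 p2 by blast
qed

end
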